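(* $\mathfrak{L}(\mathbf{F}_2)^w_{O(n)} = \mathsf{CF}$.
   Context: For a group $G$ with identity $e$, a $G$-automaton is a tuple $(Q,\Sigma,G,\delta,q_0,Q_a)$ where $Q$ is a finite set of states, $\Sigma$ a finite input alphabet, $q_0\in Q$ the initial state, $Q_a\subseteq Q$ the accepting states, and $\delta$ assigns to each $(q,\sigma)\in Q\times(\Sigma\cup\{\varepsilon\})$ a finite set of pairs $(q',m)\in Q\times G$. The register holds an element of $G$, initially $e$; using a transition $(q',m)\in\delta(q,\sigma)$ (one step) the automaton reads $\sigma$ (or nothing), moves to $q'$ and replaces the register content $x$ by $xm$. A word is accepted if some computation reads it entirely and ends in an accepting state with register equal to $e$. A $G$-automaton recognizing $\mathtt{L}$ is weakly $t(n)$ time-bounded if every $x\in\mathtt{L}$ with $|x|=n$ has an accepting computation of at most $t(n)$ steps; $\mathfrak{L}(G)^w_{O(n)}$ is the class of languages recognized by weakly $t(n)$ time-bounded $G$-automata for some $t(n)=O(n)$. $\mathbf{F}_2$ is the free group of rank 2; $\mathsf{CF}$ is the class of context-free languages. *)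

theory Defs
  imports "HOL-Algebra.Group" "HOL-Library.Landau_Symbols"
begin

text \<open>Letters are pairs (generator, inverted?): generator False = a, True = b;
  second component True means the inverse letter.\<close>

type_synonym f2_letter = "bool \<times> bool"

definition cancels :: "f2_letter \<Rightarrow> f2_letter \<Rightarrow> bool" where
  "cancels x y \<longleftrightarrow> fst x = fst y \<and> snd x \<noteq> snd y"

definition reduced :: "f2_letter list \<Rightarrow> bool" where
  "reduced w \<longleftrightarrow> (\<forall>i. Suc i < length w \<longrightarrow> \<not> cancels (w ! i) (w ! Suc i))"

fun reduce :: "f2_letter list \<Rightarrow> f2_letter list" where
  "reduce [] = []"
| "reduce (x # w) = (case reduce w of
       [] \<Rightarrow> [x]
     | (y # r) \<Rightarrow> (if cancels x y then r else x # y # r))"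

definition F2 :: "f2_letter list monoid" where
  "F2 = \<lparr>carrier = {w. reduced w}, mult = (\<lambda>x y. reduce (x @ y)), one = []\<rparr>"

text \<open>Transitions labelled by None are epsilon-transitions.\<close>

record ('q, 'a, 'g) gaut =
  states :: "'q set"
  alphabet :: "'a set"
  init :: 'q
  acc :: "'q set"
  delta :: "'q \<Rightarrow> 'a option \<Rightarrow> ('q \<times> 'g) set"

definition wf_gaut :: "('g, 'm) monoid_scheme \<Rightarrow> ('q, 'a, 'g) gaut \<Rightarrow> bool" where
  "wf_gaut G A \<longleftrightarrow> finite (states A) \<and> finite (alphabet A) \<and> init A \<in> states A
     \<and> acc A \<subseteq> states A
     \<and> (\<forall>q s. (q \<in> states A \<and> (s = None \<or> (\<exists>a \<in> alphabet A. s = Some a)))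
            \<longrightarrow> finite (delta A q s) \<and> delta A q s \<subseteq> states A \<times> carrier G)
     \<and> (\<forall>q s. \<not> (q \<in> states A \<and> (s = None \<or> (\<exists>a \<in> alphabet A. s = Some a)))
            \<longrightarrow> delta A q s = {})"

inductive comp :: "('g, 'm) monoid_scheme \<Rightarrow> ('q, 'a, 'g) gaut \<Rightarrow> 'q \<Rightarrow> 'a list \<Rightarrow> 'g \<Rightarrow> nat
                     \<Rightarrow> 'q \<Rightarrow> 'g \<Rightarrow> bool"
  for G A where
  stop: "comp G A q [] x 0 q x"
| read: "(q1, m) \<in> delta A q (Some a) \<Longrightarrow> comp G A q1 w (x \<otimes>\<^bsub>G\<^esub> m) k q' x'
          \<Longrightarrow> comp G A q (a # w) x (Suc k) q' x'"
| eps: "(q1, m) \<in> delta A q None \<Longrightarrow> comp G A q1 w (x \<otimes>\<^bsub>G\<^esub> m) k q' x'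
          \<Longrightarrow> comp G A q w x (Suc k) q' x'"

definition accepts_in :: "('g, 'm) monoid_scheme \<Rightarrow> ('q, 'a, 'g) gaut \<Rightarrow> 'a list \<Rightarrow> nat \<Rightarrow> bool" where
  "accepts_in G A w k \<longleftrightarrow> (\<exists>q' \<in> acc A. comp G A (init A) w \<one>\<^bsub>G\<^esub> k q' \<one>\<^bsub>G\<^esub>)"

definition gaut_lang :: "('g, 'm) monoid_scheme \<Rightarrow> ('q, 'a, 'g) gaut \<Rightarrow> 'a list set" where
  "gaut_lang G A = {w. \<exists>k. accepts_in G A w k}"

definition weakly_time_bounded ::
  "('g, 'm) monoid_scheme \<Rightarrow> ('q, 'a, 'g) gaut \<Rightarrow> (nat \<Rightarrow> nat) \<Rightarrow> bool" where
  "weakly_time_bounded G A t \<longleftrightarrow> (\<forall>w \<in> gaut_lang G A. \<exists>k \<le> t (length w). accepts_in G A w k)"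

text \<open>The class L(G)^w_{O(n)} over a given finite input alphabet Sigma
  (states are taken from nat, which is no restriction as state sets are finite).\<close>

definition weak_linear_class :: "('g, 'm) monoid_scheme \<Rightarrow> 'a set \<Rightarrow> 'a list set set" where
  "weak_linear_class G \<Sigma> = {L. \<exists>(A :: (nat, 'a, 'g) gaut) t.
       wf_gaut G A \<and> alphabet A = \<Sigma> \<and> gaut_lang G A = L
       \<and> (\<lambda>n. real (t n)) \<in> O(\<lambda>n. real n) \<and> weakly_time_bounded G A t}"

record ('n, 'a) cfg =
  nonterms :: "'n set"
  terms :: "'a set"
  prods :: "('n \<times> ('n + 'a) list) set"
  start :: 'n

definition wf_cfg :: "('n, 'a) cfg \<Rightarrow> bool" where
  "wf_cfg G \<longleftrightarrow> finite (nonterms G) \<and> finite (terms G) \<and> finite (prods G)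
     \<and> start G \<in> nonterms G
     \<and> (\<forall>(A, \<alpha>) \<in> prods G. A \<in> nonterms G
          \<and> (\<forall>s \<in> set \<alpha>. case s of Inl B \<Rightarrow> B \<in> nonterms G | Inr a \<Rightarrow> a \<in> terms G))"

definition derive1 :: "('n, 'a) cfg \<Rightarrow> ('n + 'a) list \<Rightarrow> ('n + 'a) list \<Rightarrow> bool" where
  "derive1 G u v \<longleftrightarrow> (\<exists>x y A \<alpha>. (A, \<alpha>) \<in> prods G \<and> u = x @ [Inl A] @ y \<and> v = x @ \<alpha> @ y)"

definition cfg_lang :: "('n, 'a) cfg \<Rightarrow> 'a list set" where
  "cfg_lang G = {w. (derive1 G)\<^sup>*\<^sup>* [Inl (start G)] (map Inr w)}"

definition CF :: "'a set \<Rightarrow> 'a list set set" where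
  "CF \<Sigma> = {L. \<exists>G :: (nat, 'a) cfg. wf_cfg G \<and> terms G = \<Sigma> \<and> cfg_lang G = L}"

end

theory Submission
  imports Defs "HOL-Library.Nat_Bijection"
begin


definition gcancel :: "('g \<times> bool) \<Rightarrow> ('g \<times> bool) \<Rightarrow> bool" where
  "gcancel x y \<longleftrightarrow> fst x = fst y \<and> snd x \<noteq> snd y"

definition gstep :: "('g \<times> bool) \<Rightarrow> ('g \<times> bool) list \<Rightarrow> ('g \<times> bool) list" where
  "gstep x r = (case r of [] \<Rightarrow> [x] | y # r' \<Rightarrow> (if gcancel x y then r' else x # y # r'))"

fun gred :: "('g \<times> bool) list \<Rightarrow> ('g \<times> bool) list" where
  "gred [] = []"
| "gred (x # w) = gstep x (gred w)"

definition greduced :: "('g \<times> bool) list \<Rightarrow> bool" where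
  "greduced w \<longleftrightarrow> (\<forall>i. Suc i < length w \<longrightarrow> \<not> gcancel (w ! i) (w ! Suc i))"

definition ginv :: "('g \<times> bool) \<Rightarrow> ('g \<times> bool)" where
  "ginv x = (fst x, \<not> snd x)"

lemma gcancel_iff: "gcancel x y \<longleftrightarrow> y = ginv x"
  by (cases x; cases y) (auto simp: gcancel_def ginv_def)

lemma reduce_gred: "reduce w = gred w"
proof (induction w)
  case (Cons x w)
  then show ?case
    by (auto simp: gstep_def cancels_def gcancel_def split: list.splits)
qed simp

lemma reduced_greduced: "reduced w = greduced w"
  by (simp add: reduced_def greduced_def cancels_def gcancel_def)

lemma greduced_Nil[simp]: "greduced []"
  by (simp add: greduced_def)

lemma greduced_Cons: "greduced (x # v) \<longleftrightarrow> greduced v \<and> (v \<noteq> [] \<longrightarrow> \<not> gcancel x (hd v))"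
proof -
  have "greduced (x # v) \<longleftrightarrow> (\<forall>i. Suc i < length (x # v) \<longrightarrow> \<not> gcancel ((x#v) ! i) ((x#v) ! Suc i))"
    by (simp add: greduced_def)
  also have "\<dots> \<longleftrightarrow> (v \<noteq> [] \<longrightarrow> \<not> gcancel x (hd v)) \<and> (\<forall>i. Suc i < length v \<longrightarrow> \<not> gcancel (v ! i) (v ! Suc i))"
  proof
    assume H: "\<forall>i. Suc i < length (x # v) \<longrightarrow> \<not> gcancel ((x#v) ! i) ((x#v) ! Suc i)"
    show "(v \<noteq> [] \<longrightarrow> \<not> gcancel x (hd v)) \<and> (\<forall>i. Suc i < length v \<longrightarrow> \<not> gcancel (v ! i) (v ! Suc i))"
    proof
      show "v \<noteq> [] \<longrightarrow> \<not> gcancel x (hd v)" using H[rule_format, of 0] by (cases v) auto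
      show "\<forall>i. Suc i < length v \<longrightarrow> \<not> gcancel (v ! i) (v ! Suc i)"
        using H by (metis Suc_less_eq length_Cons nth_Cons_Suc)
    qed
  next
    assume H: "(v \<noteq> [] \<longrightarrow> \<not> gcancel x (hd v)) \<and> (\<forall>i. Suc i < length v \<longrightarrow> \<not> gcancel (v ! i) (v ! Suc i))"
    show "\<forall>i. Suc i < length (x # v) \<longrightarrow> \<not> gcancel ((x#v) ! i) ((x#v) ! Suc i)"
    proof (intro allI impI)
      fix i assume "Suc i < length (x # v)"
      then show "\<not> gcancel ((x#v) ! i) ((x#v) ! Suc i)"
        using H by (cases i) (auto simp: hd_conv_nth)
    qed
  qed
  finally show ?thesis by (auto simp: greduced_def)
qed

lemma greduced_append:
  "greduced (u @ v) \<longleftrightarrow> greduced u \<and> greduced v \<and> (u \<noteq> [] \<longrightarrow> v \<noteq> [] \<longrightarrow> \<not> gcancel (last u) (hd v))"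
proof (induction u)
  case (Cons x u)
  then show ?case
    by (cases u) (auto simp: greduced_Cons)
qed simp

lemma greduced_gred: "greduced (gred w)"
proof (induction w)
  case (Cons x w)
  then show ?case
    by (auto simp: gstep_def greduced_Cons split: list.splits)
qed simp

lemma gred_greduced: "greduced w \<Longrightarrow> gred w = w"
proof (induction w)
  case (Cons x w)
  then show ?case
    by (cases w) (auto simp: gstep_def greduced_Cons)
qed simp

lemma gred_gred[simp]: "gred (gred w) = gred w"
  by (simp add: gred_greduced greduced_gred)

lemma gstep_gstep: "gcancel x y \<Longrightarrow> greduced z \<Longrightarrow> gstep x (gstep y z) = z"
proof (cases z)
  case Nil
  assume "gcancel x y" then show ?thesis using Nil by (simp add: gstep_def)
next
  case (Cons y' z')
  assume c: "gcancel x y" and r: "greduced z"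
  show ?thesis
  proof (cases "gcancel y y'")
    case True
    then have "y' = x" using c by (cases x; cases y; cases y') (auto simp: gcancel_def)
    then show ?thesis using Cons True r
      by (cases z') (auto simp: gstep_def greduced_Cons)
  next
    case False
    then show ?thesis using Cons c by (simp add: gstep_def)
  qed
qed

lemma gred_append_right: "gred (u @ v) = gred (u @ gred v)"
  by (induction u) auto

lemma gstep_gred_append: "greduced r \<Longrightarrow> gstep x (gred (r @ v)) = gred (gstep x r @ v)"
proof (cases r)
  case Nil
  then show ?thesis by (simp add: gstep_def)
next
  case (Cons y r')
  assume red: "greduced r"
  show ?thesis
  proof (cases "gcancel x y")
    case True
    have "greduced (gred (r' @ v))" by (rule greduced_gred)
    then have "gstep x (gstep y (gred (r' @ v))) = gred (r' @ v)"
      using True gstep_gstep by blast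
    then show ?thesis using Cons True by (simp add: gstep_def)
  next
    case False
    then show ?thesis using Cons by (simp add: gstep_def)
  qed
qed

lemma gred_append_left: "gred (u @ v) = gred (gred u @ v)"
proof (induction u)
  case (Cons x u)
  have "gred ((x # u) @ v) = gstep x (gred (u @ v))" by simp
  also have "\<dots> = gstep x (gred (gred u @ v))" using Cons by simp
  also have "\<dots> = gred (gstep x (gred u) @ v)"
    by (rule gstep_gred_append[OF greduced_gred])
  finally show ?case by simp
qed simp

lemma gred_append: "gred (u @ v) = gred (gred u @ gred v)"
  by (metis gred_append_left gred_append_right)

lemma gred_cong_mid: "gred u = gred u' \<Longrightarrow> gred (x @ u @ y) = gred (x @ u' @ y)"
  by (metis gred_append_left gred_append_right)

lemma gred_cancel_pair: "gcancel a b \<Longrightarrow> gred (x @ a # b # y) = gred (x @ y)"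
proof -
  assume c: "gcancel a b"
  have "gred (a # b # y) = gred y"
    using gstep_gstep[OF c greduced_gred] by simp
  then show ?thesis by (metis gred_append_right)
qed

lemma gred_Nil_append: "gred u = [] \<Longrightarrow> gred (x @ u @ y) = gred (x @ y)"
  using gred_cong_mid[of u "[]" x y] by simp

lemma gred_Cons_decomp:
  "gred l = z # r \<Longrightarrow> \<exists>u v. l = u @ z # v \<and> gred u = [] \<and> gred v = r"
proof (induction "length l" arbitrary: l z r rule: less_induct)
  case less
  show ?case
  proof (cases l)
    case Nil then show ?thesis using less by simp
  next
    case (Cons y l')
    show ?thesis
    proof (cases "gred l'")
      case Nil
      then have "z = y" "r = []" using less Cons by (auto simp: gstep_def)
      then show ?thesis using Cons Nil by (intro exI[of _ "[]"] exI[of _ l']) auto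
    next
      case (Cons y' r')
      note C1 = \<open>l = y # l'\<close>
      show ?thesis
      proof (cases "gcancel y y'")
        case True
        then have r': "r' = z # r" using less C1 Cons by (simp add: gstep_def)
        obtain u1 v1 where l': "l' = u1 @ y' # v1" and u1: "gred u1 = []" and v1: "gred v1 = r'"
          using less(1)[of l' y' r'] C1 Cons by auto
        obtain u2 v2 where v1d: "v1 = u2 @ z # v2" and u2: "gred u2 = []" and v2: "gred v2 = r"
          using less(1)[of v1 z r] C1 l' v1 r' by auto
        have "gred (y # u1 @ y' # u2) = gred (y # y' # u2)"
          using gred_Nil_append[OF u1, of "[y]" "y' # u2"] by simp
        also have "\<dots> = gred u2" using gred_cancel_pair[OF True, of "[]" u2] by simp
        finally have "gred (y # u1 @ y' # u2) = []" using u2 by simp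
        then show ?thesis using C1 l' v1d v2
          by (intro exI[of _ "y # u1 @ y' # u2"] exI[of _ v2]) auto
      next
        case False
        then have "z = y" "r = y' # r'" using less C1 Cons by (auto simp: gstep_def)
        then show ?thesis using C1 Cons by (intro exI[of _ "[]"] exI[of _ l']) auto
      qed
    qed
  qed
qed

lemma gred_Nil_decomp:
  assumes "gred (x # l) = []"
  shows "\<exists>u v. l = u @ ginv x # v \<and> gred u = [] \<and> gred v = []"
proof -
  from assms obtain y r where "gred l = y # r" "gcancel x y" "r = []"
    by (auto simp: gstep_def split: list.splits if_splits)
  then show ?thesis using gred_Cons_decomp[of l y r] by (auto simp: gcancel_iff)
qed

lemma gred_wrap: "gred u = [] \<Longrightarrow> gred (x # u @ ginv x # v) = gred v"
proof -
  assume "gred u = []"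
  then have "gred (x # u @ ginv x # v) = gred (x # ginv x # v)"
    using gred_Nil_append[of u "[x]" "ginv x # v"] by simp
  also have "\<dots> = gred v" using gred_cancel_pair[of x "ginv x" "[]" v] by (simp add: gcancel_iff)
  finally show ?thesis .
qed

lemma ginv_ginv[simp]: "ginv (ginv x) = x" by (cases x) (simp add: ginv_def)


definition ol :: "'a option \<Rightarrow> 'a list" where
  "ol s = (case s of None \<Rightarrow> [] | Some x \<Rightarrow> [x])"

lemma ol_simps[simp]: "ol None = []" "ol (Some x) = [x]" by (simp_all add: ol_def)

inductive walk :: "('v \<Rightarrow> 'a option \<Rightarrow> 'l option \<Rightarrow> 'v \<Rightarrow> bool) \<Rightarrow> 'v \<Rightarrow> 'a list \<Rightarrow> 'l list \<Rightarrow> nat \<Rightarrow> 'v \<Rightarrow> bool"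
  for E where
  wrefl: "walk E u [] [] 0 u"
| wstep: "E u s lo u' \<Longrightarrow> walk E u' w l n v \<Longrightarrow> walk E u (ol s @ w) (ol lo @ l) (Suc n) v"

lemma walk_trans:
  "walk E u w1 l1 n1 m \<Longrightarrow> walk E m w2 l2 n2 v \<Longrightarrow> walk E u (w1 @ w2) (l1 @ l2) (n1 + n2) v"
proof (induction rule: walk.induct)
  case (wstep u s lo u' w l n v')
  have "walk E u' (w @ w2) (l @ l2) (n + n2) v" using wstep.IH wstep.prems by blast
  then show ?case using walk.wstep[of E u s lo u' "w @ w2" "l @ l2" "n + n2" v] wstep.hyps(1) by simp
qed simp

lemma walk_one: "E u s lo v \<Longrightarrow> walk E u (ol s) (ol lo) 1 v"
  using walk.wstep[of E u s lo v "[]" "[]" 0 v] walk.wrefl[of E v] by simp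

lemma walk_split:
  "walk E u w (l1 @ l2) n v \<Longrightarrow> \<exists>m w1 w2 n1 n2. w = w1 @ w2 \<and> n = n1 + n2 \<and> walk E u w1 l1 n1 m \<and> walk E m w2 l2 n2 v"
proof (induction u w "l1 @ l2" n v arbitrary: l1 rule: walk.induct)
  case (wrefl u)
  then show ?case by (auto intro: walk.wrefl)
next
  case (wstep u s lo u' w l n v)
  show ?case
  proof (cases lo)
    case None
    then have "l = l1 @ l2" using wstep by simp
    then obtain m w1 w2 n1 n2 where "w = w1 @ w2" "n = n1 + n2" "walk E u' w1 l1 n1 m" "walk E m w2 l2 n2 v"
      using wstep by blast
    then show ?thesis using None wstep(1)
      by (intro exI[of _ m] exI[of _ "ol s @ w1"] exI[of _ w2] exI[of _ "Suc n1"] exI[of _ n2])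
         (auto intro: walk.wstep[where lo = None, simplified])
  next
    case (Some x)
    show ?thesis
    proof (cases l1)
      case Nil
      then show ?thesis using wstep
        by (intro exI[of _ u] exI[of _ "[]"] exI[of _ "ol s @ w"] exI[of _ 0] exI[of _ "Suc n"])
           (auto intro: walk.intros)
    next
      case (Cons x' l1')
      then have "x' = x" "l = l1' @ l2" using wstep Some by auto
      then obtain m w1 w2 n1 n2 where "w = w1 @ w2" "n = n1 + n2" "walk E u' w1 l1' n1 m" "walk E m w2 l2 n2 v"
        using wstep by blast
      then show ?thesis using Some wstep(1) Cons \<open>x' = x\<close>
        by (intro exI[of _ m] exI[of _ "ol s @ w1"] exI[of _ w2] exI[of _ "Suc n1"] exI[of _ n2])
           (auto intro: walk.wstep[where lo = "Some x", simplified])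
    qed
  qed
qed

lemma walk_first:
  "walk E u w (y # l) n v \<Longrightarrow> \<exists>m1 m2 s w1 w2 n1 n2. walk E u w1 [] n1 m1 \<and> E m1 s (Some y) m2
      \<and> walk E m2 w2 l n2 v \<and> w = w1 @ ol s @ w2 \<and> n = n1 + Suc n2"
proof (induction u w "y # l" n v rule: walk.induct)
  case (wstep u s lo u' w l' n v)
  show ?case
  proof (cases lo)
    case None
    then obtain m1 m2 s' w1 w2 n1 n2 where "walk E u' w1 [] n1 m1" "E m1 s' (Some y) m2"
      "walk E m2 w2 l n2 v" "w = w1 @ ol s' @ w2" "n = n1 + Suc n2"
      using wstep by auto
    then show ?thesis using None wstep(1)
      by (intro exI[of _ m1] exI[of _ m2] exI[of _ s'] exI[of _ "ol s @ w1"] exI[of _ w2]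
            exI[of _ "Suc n1"] exI[of _ n2])
         (auto intro: walk.wstep[where lo = None, simplified])
  next
    case (Some x)
    then show ?thesis using wstep
      by (intro exI[of _ u] exI[of _ u'] exI[of _ s] exI[of _ "[]"] exI[of _ w]
            exI[of _ 0] exI[of _ n]) (auto intro: walk.intros)
  qed
qed

inductive genl :: "('n \<times> ('n + 'a) list) set \<Rightarrow> ('n + 'a) list \<Rightarrow> 'a list \<Rightarrow> bool" for P where
  gnil: "genl P [] []"
| gterm: "genl P \<alpha> w \<Longrightarrow> genl P (Inr a # \<alpha>) (a # w)"
| gnt: "(A, \<gamma>) \<in> P \<Longrightarrow> genl P \<gamma> u \<Longrightarrow> genl P \<alpha> v \<Longrightarrow> genl P (Inl A # \<alpha>) (u @ v)"

lemma genl_Nil_iff: "genl P [] w \<longleftrightarrow> w = []"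
  by (auto elim: genl.cases intro: genl.intros)

lemma genl_Inl_iff: "genl P (Inl A # \<alpha>) w \<longleftrightarrow> (\<exists>\<gamma> u v. w = u @ v \<and> (A, \<gamma>) \<in> P \<and> genl P \<gamma> u \<and> genl P \<alpha> v)"
proof
  assume "genl P (Inl A # \<alpha>) w"
  then show "\<exists>\<gamma> u v. w = u @ v \<and> (A, \<gamma>) \<in> P \<and> genl P \<gamma> u \<and> genl P \<alpha> v"
    by (cases rule: genl.cases) auto
qed (auto intro: genl.intros)

lemma genl_Inr_iff: "genl P (Inr a # \<alpha>) w \<longleftrightarrow> (\<exists>v. w = a # v \<and> genl P \<alpha> v)"
proof
  assume "genl P (Inr a # \<alpha>) w"
  then show "\<exists>v. w = a # v \<and> genl P \<alpha> v"
    by (cases rule: genl.cases) auto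
qed (auto intro: genl.intros)

lemma genl_append_iff:
  "genl P (x @ y) w \<longleftrightarrow> (\<exists>w1 w2. w = w1 @ w2 \<and> genl P x w1 \<and> genl P y w2)"
proof (induction x arbitrary: w)
  case Nil
  then show ?case by (auto intro: genl.intros elim: genl.cases)
next
  case (Cons s x)
  show ?case
  proof (cases s)
    case (Inl A)
    have "genl P (Inl A # x @ y) w \<longleftrightarrow> (\<exists>\<gamma> u v. w = u @ v \<and> (A, \<gamma>) \<in> P \<and> genl P \<gamma> u \<and> genl P (x @ y) v)"
      by (rule genl_Inl_iff)
    also have "\<dots> \<longleftrightarrow> (\<exists>w1 w2. w = w1 @ w2 \<and> genl P (Inl A # x) w1 \<and> genl P y w2)"
    proof
      assume "\<exists>\<gamma> u v. w = u @ v \<and> (A, \<gamma>) \<in> P \<and> genl P \<gamma> u \<and> genl P (x @ y) v"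
      then obtain \<gamma> u v where "w = u @ v" "(A, \<gamma>) \<in> P" "genl P \<gamma> u" "genl P (x @ y) v" by blast
      then obtain v1 v2 where "v = v1 @ v2" "genl P x v1" "genl P y v2" using Cons by blast
      then show "\<exists>w1 w2. w = w1 @ w2 \<and> genl P (Inl A # x) w1 \<and> genl P y w2"
        using \<open>w = u @ v\<close> \<open>(A, \<gamma>) \<in> P\<close> \<open>genl P \<gamma> u\<close>
        by (intro exI[of _ "u @ v1"] exI[of _ v2]) (auto intro: genl.intros)
    next
      assume "\<exists>w1 w2. w = w1 @ w2 \<and> genl P (Inl A # x) w1 \<and> genl P y w2"
      then obtain w1 w2 where "w = w1 @ w2" "genl P (Inl A # x) w1" "genl P y w2" by blast
      moreover from \<open>genl P (Inl A # x) w1\<close> obtain \<gamma> u v where "w1 = u @ v" "(A, \<gamma>) \<in> P" "genl P \<gamma> u" "genl P x v"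
        by (auto elim: genl.cases)
      ultimately show "\<exists>\<gamma> u v. w = u @ v \<and> (A, \<gamma>) \<in> P \<and> genl P \<gamma> u \<and> genl P (x @ y) v"
        using Cons by (intro exI[of _ \<gamma>] exI[of _ u] exI[of _ "v @ w2"]) auto
    qed
    finally show ?thesis using Inl by simp
  next
    case (Inr a)
    have "genl P (Inr a # x @ y) w \<longleftrightarrow> (\<exists>v. w = a # v \<and> genl P (x @ y) v)"
      by (rule genl_Inr_iff)
    also have "\<dots> \<longleftrightarrow> (\<exists>w1 w2. w = w1 @ w2 \<and> genl P (Inr a # x) w1 \<and> genl P y w2)"
    proof
      assume "\<exists>v. w = a # v \<and> genl P (x @ y) v"
      then show "\<exists>w1 w2. w = w1 @ w2 \<and> genl P (Inr a # x) w1 \<and> genl P y w2"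
        using Cons by (metis Cons_eq_appendI genl.gterm)
    next
      assume "\<exists>w1 w2. w = w1 @ w2 \<and> genl P (Inr a # x) w1 \<and> genl P y w2"
      then obtain w1 w2 where "w = w1 @ w2" "genl P (Inr a # x) w1" "genl P y w2" by blast
      moreover from \<open>genl P (Inr a # x) w1\<close> obtain v where "w1 = a # v" "genl P x v"
        by (auto elim: genl.cases)
      ultimately show "\<exists>v. w = a # v \<and> genl P (x @ y) v" using Cons by auto
    qed
    finally show ?thesis using Inr by simp
  qed
qed

lemma genl_append: "genl P x w1 \<Longrightarrow> genl P y w2 \<Longrightarrow> genl P (x @ y) (w1 @ w2)"
  using genl_append_iff by blast

lemma genl_map_Inr: "genl P (map Inr w) w"
  by (induction w) (auto intro: genl.intros)

lemma genl_single_nt: "(A, \<gamma>) \<in> P \<Longrightarrow> genl P \<gamma> u \<Longrightarrow> genl P [Inl A] u"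
  using genl.gnt[of A \<gamma> P u "[]" "[]", OF _ _ genl.gnil] by simp

lemma derive1_ctx:
  "(derive1 G)\<^sup>*\<^sup>* u v \<Longrightarrow> (derive1 G)\<^sup>*\<^sup>* (x @ u @ y) (x @ v @ y)"
proof (induction rule: rtranclp_induct)
  case (step v v')
  then obtain x' y' A \<alpha> where "(A, \<alpha>) \<in> prods G" "v = x' @ [Inl A] @ y'" "v' = x' @ \<alpha> @ y'"
    by (auto simp: derive1_def)
  then have "derive1 G (x @ v @ y) (x @ v' @ y)"
    unfolding derive1_def by (intro exI[of _ "x @ x'"] exI[of _ "y' @ y"] exI[of _ A] exI[of _ \<alpha>]) auto
  then show ?case using step by simp
qed simp

lemma genl_derive: "genl (prods G) \<alpha> w \<Longrightarrow> (derive1 G)\<^sup>*\<^sup>* \<alpha> (map Inr w)"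
proof (induction rule: genl.induct)
  case gnil
  then show ?case by simp
next
  case (gterm \<alpha> w a)
  then show ?case using derive1_ctx[of G \<alpha> "map Inr w" "[Inr a]" "[]"] by simp
next
  case (gnt A \<gamma> u \<alpha> v)
  have "derive1 G (Inl A # \<alpha>) (\<gamma> @ \<alpha>)"
    unfolding derive1_def using gnt(1) by (intro exI[of _ "[]"] exI[of _ \<alpha>] exI[of _ A] exI[of _ \<gamma>]) auto
  moreover have "(derive1 G)\<^sup>*\<^sup>* (\<gamma> @ \<alpha>) (map Inr u @ \<alpha>)"
    using derive1_ctx[OF gnt(4), of "[]" \<alpha>] by simp
  moreover have "(derive1 G)\<^sup>*\<^sup>* (map Inr u @ \<alpha>) (map Inr u @ map Inr v)"
    using derive1_ctx[OF gnt(5), of "map Inr u" "[]"] by simp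
  ultimately show ?case by simp
qed

lemma derive_genl: "(derive1 G)\<^sup>*\<^sup>* \<alpha> (map Inr w) \<Longrightarrow> genl (prods G) \<alpha> w"
proof (induction rule: converse_rtranclp_induct)
  case base
  then show ?case by (rule genl_map_Inr)
next
  case (step u v)
  then obtain x y A \<gamma> where A: "(A, \<gamma>) \<in> prods G" "u = x @ [Inl A] @ y" "v = x @ \<gamma> @ y"
    by (auto simp: derive1_def)
  from step(3) A obtain w1 w23 where "w = w1 @ w23" "genl (prods G) x w1" "genl (prods G) (\<gamma> @ y) w23"
    using genl_append_iff by metis
  moreover from this(3) obtain w2 w3 where "w23 = w2 @ w3" "genl (prods G) \<gamma> w2" "genl (prods G) y w3"
    using genl_append_iff by metis
  ultimately show ?case using A genl.gnt[OF A(1), of w2 y w3] genl_append by fastforce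
qed

lemma cfg_lang_genl: "cfg_lang G = {w. genl (prods G) [Inl (start G)] w}"
  unfolding cfg_lang_def using genl_derive derive_genl by blast



definition encA :: "nat \<Rightarrow> f2_letter list" where "encA c = replicate c (False, False)"
definition encB :: "nat \<Rightarrow> f2_letter list" where "encB c = replicate c (False, True)"

definition enc :: "nat \<times> bool \<Rightarrow> f2_letter list" where
  "enc x = encA (fst x) @ [(True, snd x)] @ encB (fst x)"

definition Fenc :: "(nat \<times> bool) list \<Rightarrow> f2_letter list" where
  "Fenc l = concat (map enc l)"

lemma Fenc_simps[simp]: "Fenc [] = []" "Fenc (x # l) = enc x @ Fenc l" "Fenc (l1 @ l2) = Fenc l1 @ Fenc l2"
  by (simp_all add: Fenc_def)

lemma greduced_replicate: "greduced (replicate n x)"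
  by (induction n) (auto simp: greduced_Cons gcancel_def)

lemma greduced_encA[simp]: "greduced (encA c)" by (simp add: encA_def greduced_replicate)
lemma greduced_encB[simp]: "greduced (encB c)" by (simp add: encB_def greduced_replicate)
lemma encA_Nil_iff[simp]: "encA c = [] \<longleftrightarrow> c = 0" by (simp add: encA_def)
lemma encB_Nil_iff[simp]: "encB c = [] \<longleftrightarrow> c = 0" by (simp add: encB_def)
lemma last_encA: "c \<noteq> 0 \<Longrightarrow> last (encA c) = (False, False)" by (simp add: encA_def last_replicate)
lemma hd_encA: "c \<noteq> 0 \<Longrightarrow> hd (encA c) = (False, False)" by (simp add: encA_def hd_replicate)
lemma last_encB: "c \<noteq> 0 \<Longrightarrow> last (encB c) = (False, True)" by (simp add: encB_def last_replicate)
lemma hd_encB: "c \<noteq> 0 \<Longrightarrow> hd (encB c) = (False, True)" by (simp add: encB_def hd_replicate)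

lemma greduced_single[simp]: "greduced [x]" by (simp add: greduced_Cons)

lemma greduced_appendI: "greduced u \<Longrightarrow> greduced v \<Longrightarrow> (u \<noteq> [] \<Longrightarrow> v \<noteq> [] \<Longrightarrow> \<not> gcancel (last u) (hd v)) \<Longrightarrow> greduced (u @ v)"
  using greduced_append by blast

lemma greduced_encA_B: "greduced (encA c @ [(True, s)])"
  by (rule greduced_appendI) (auto simp: last_encA gcancel_def)

lemma greduced_B_encB: "greduced ((True, s) # encB c)"
  unfolding greduced_Cons by (auto simp: hd_encB gcancel_def)

lemma greduced_enc: "greduced (enc x)"
proof -
  have "enc x = (encA (fst x) @ [(True, snd x)]) @ encB (fst x)" by (simp add: enc_def)
  moreover have "greduced ((encA (fst x) @ [(True, snd x)]) @ encB (fst x))"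
    by (rule greduced_appendI) (auto simp: greduced_encA_B hd_encB gcancel_def)
  ultimately show ?thesis by simp
qed



lemma encB_Suc: "encB (Suc n) = encB n @ [(False, True)]"
  by (simp add: encB_def replicate_append_same)
lemma encA_Suc: "encA (Suc n) = (False, False) # encA n"
  by (simp add: encA_def)
lemma encA_Suc': "encA (Suc n) = encA n @ [(False, False)]"
  by (simp add: encA_def replicate_append_same)
lemma encB_Suc': "encB (Suc n) = (False, True) # encB n"
  by (simp add: encB_def)

lemma gred_BA: "gred (u @ encB n @ encA n @ v) = gred (u @ v)"
proof (induction n arbitrary: v)
  case (Suc n)
  have eq: "u @ encB (Suc n) @ encA (Suc n) @ v = (u @ encB n) @ (False, True) # (False, False) # (encA n @ v)"
    by (simp add: encB_Suc encA_Suc)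
  have "gred (u @ encB (Suc n) @ encA (Suc n) @ v) = gred ((u @ encB n) @ encA n @ v)"
    unfolding eq by (rule gred_cancel_pair) (simp add: gcancel_def)
  then show ?case using Suc.IH by simp
qed (simp add: encA_def encB_def)

lemma gred_AB: "gred (u @ encA n @ encB n @ v) = gred (u @ v)"
proof (induction n arbitrary: v)
  case (Suc n)
  have eq: "u @ encA (Suc n) @ encB (Suc n) @ v = (u @ encA n) @ (False, False) # (False, True) # (encB n @ v)"
    by (simp add: encA_Suc' encB_Suc')
  have "gred (u @ encA (Suc n) @ encB (Suc n) @ v) = gred ((u @ encA n) @ encB n @ v)"
    unfolding eq by (rule gred_cancel_pair) (simp add: gcancel_def)
  then show ?case using Suc.IH by simp
qed (simp add: encA_def encB_def)

lemma gred_enc_cancel: "gcancel x y \<Longrightarrow> gred (u @ enc x @ enc y @ v) = gred (u @ v)"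
proof -
  assume "gcancel x y"
  then obtain c s where xy: "x = (c, s)" "y = (c, \<not> s)" by (cases x; cases y) (auto simp: gcancel_def)
  have "gred (u @ enc x @ enc y @ v) = gred ((u @ encA c @ [(True, s)]) @ encB c @ encA c @ ([(True, \<not> s)] @ encB c @ v))"
    using xy by (simp add: enc_def)
  also have "\<dots> = gred ((u @ encA c) @ (True, s) # (True, \<not> s) # (encB c @ v))"
    by (subst gred_BA) simp
  also have "\<dots> = gred ((u @ encA c) @ encB c @ v)"
    by (rule gred_cancel_pair) (simp add: gcancel_def)
  also have "\<dots> = gred (u @ v)" using gred_AB[of u c v] by simp
  finally show ?thesis .
qed

lemma gred_Fenc: "gred (Fenc l) = gred (Fenc (gred l))"
proof (induction l)
  case (Cons x l)
  have "gred (Fenc (x # l)) = gred (enc x @ gred (Fenc l))"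
    by (simp only: Fenc_simps) (rule gred_append_right)
  also have "\<dots> = gred (enc x @ Fenc (gred l))"
    using Cons by (metis gred_append_right)
  also have "\<dots> = gred (Fenc (gred (x # l)))"
  proof (cases "gred l")
    case Nil
    then show ?thesis by (simp add: gstep_def)
  next
    case (Cons y r)
    show ?thesis
    proof (cases "gcancel x y")
      case True
      then show ?thesis using Cons gred_enc_cancel[OF True, of "[]" "Fenc r"] by (simp add: gstep_def)
    next
      case False
      then show ?thesis using Cons by (simp add: gstep_def)
    qed
  qed
  finally show ?case .
qed simp

definition apw :: "nat \<Rightarrow> nat \<Rightarrow> f2_letter list" where
  "apw c c1 = (if c \<le> c1 then encA (c1 - c) else encB (c - c1))"

lemma gred_BA_gen: "gred (u @ encB c @ encA c1 @ v) = gred (u @ apw c c1 @ v)"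
proof (cases "c \<le> c1")
  case True
  then obtain d where d: "c1 = c + d" by (metis le_add_diff_inverse)
  have "encA c1 = encA c @ encA d" by (simp add: d encA_def replicate_add)
  then show ?thesis using gred_BA[of u c "encA d @ v"] True d by (simp add: apw_def)
next
  case False
  then obtain d where d: "c = c1 + d" by (metis le_add_diff_inverse nat_le_linear)
  have "encB c = encB d @ encB c1" by (simp add: d encB_def replicate_add[symmetric] add.commute)
  then show ?thesis using gred_BA[of "u @ encB d" c1 v] False d by (simp add: apw_def)
qed

lemma greduced_apw[simp]: "greduced (apw c c1)" by (simp add: apw_def)

lemma last_apw: "apw c c1 \<noteq> [] \<Longrightarrow> fst (last (apw c c1)) = False"
  by (auto simp: apw_def last_encA last_encB)

lemma hd_apw: "apw c c1 \<noteq> [] \<Longrightarrow> fst (hd (apw c c1)) = False"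
  by (auto simp: apw_def hd_encA hd_encB)

lemma apw_same[simp]: "apw c c = []" by (simp add: apw_def)

lemma apw_Nil_iff: "apw c c1 = [] \<longleftrightarrow> c = c1" by (auto simp: apw_def)

lemma greduced_apw_B: "greduced (apw c c1 @ (True, s) # W) \<longleftrightarrow> greduced ((True, s) # W)"
proof
  assume "greduced (apw c c1 @ (True, s) # W)"
  then show "greduced ((True, s) # W)" using greduced_append by blast
next
  assume "greduced ((True, s) # W)"
  then show "greduced (apw c c1 @ (True, s) # W)"
    by (intro greduced_appendI) (auto simp: gcancel_def dest!: last_apw)
qed

lemma Fenc_normal:
  "greduced l \<Longrightarrow> l \<noteq> [] \<Longrightarrow> \<exists>W. gred (Fenc l) = encA (fst (hd l)) @ (True, snd (hd l)) # W"
proof (induction l)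
  case (Cons x l)
  obtain c s where x: "x = (c, s)" by (cases x)
  show ?case
  proof (cases l)
    case Nil
    then show ?thesis using x greduced_enc[of x]
      by (auto simp: enc_def gred_greduced)
  next
    case (Cons y l')
    obtain c1 s1 where y: "y = (c1, s1)" by (cases y)
    have rl: "greduced l" and nc: "\<not> gcancel x y" using Cons.prems Cons by (auto simp: greduced_Cons)
    then obtain W where W: "gred (Fenc l) = encA c1 @ (True, s1) # W"
      using Cons.IH Cons y by auto
    have "gred (Fenc (x # l)) = gred (enc x @ gred (Fenc l))"
      by (simp only: Fenc_simps) (rule gred_append_right)
    also have "\<dots> = gred ((encA c @ [(True, s)]) @ encB c @ encA c1 @ ((True, s1) # W))"
      using W x by (simp add: enc_def)
    also have "\<dots> = gred ((encA c @ [(True, s)]) @ apw c c1 @ ((True, s1) # W))"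
      by (rule gred_BA_gen)
    also have "\<dots> = (encA c @ [(True, s)]) @ apw c c1 @ ((True, s1) # W)"
    proof (rule gred_greduced)
      have r1: "greduced ((True, s1) # W)"
        using greduced_gred[of "Fenc l"] W by (simp add: greduced_append)
      have r2: "greduced (apw c c1 @ (True, s1) # W)" using r1 greduced_apw_B by blast
      have r3: "greduced (encA c @ [(True, s)])"
        by (rule greduced_encA_B)
      show "greduced ((encA c @ [(True, s)]) @ apw c c1 @ (True, s1) # W)"
      proof (cases "c = c1")
        case True
        then have "s = s1" using nc x y by (auto simp: gcancel_def)
        have "greduced ((encA c @ [(True, s)]) @ (True, s1) # W)"
          by (rule greduced_appendI[OF r3 r1]) (simp add: gcancel_def \<open>s = s1\<close>)
        then show ?thesis using True by simp
      next
        case False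
        then have ne: "apw c c1 \<noteq> []" by (simp add: apw_Nil_iff)
        then have "fst (hd (apw c c1 @ (True, s1) # W)) = False" using hd_apw by simp
        then show ?thesis
          by (intro greduced_appendI[OF r3 r2]) (simp add: gcancel_def)
      qed
    qed
    finally show ?thesis using x by (simp add: enc_def)
  qed
qed simp

lemma gred_Fenc_Nil_iff: "gred (Fenc l) = [] \<longleftrightarrow> gred l = []"
proof
  assume "gred (Fenc l) = []"
  then have h: "gred (Fenc (gred l)) = []" using gred_Fenc by metis
  show "gred l = []"
  proof (rule ccontr)
    assume "gred l \<noteq> []"
    then obtain W where "gred (Fenc (gred l)) = encA (fst (hd (gred l))) @ (True, snd (hd (gred l))) # W"
      using Fenc_normal[OF greduced_gred] by blast
    then show False using h by simp
  qed
next
  assume "gred l = []"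
  then show "gred (Fenc l) = []" using gred_Fenc[of l] by simp
qed


lemma mult_F2: "x \<otimes>\<^bsub>F2\<^esub> m = reduce (x @ m)" by (simp add: F2_def)
lemma mult_F2': "x \<otimes>\<^bsub>F2\<^esub> m = gred (x @ m)" by (simp add: F2_def reduce_gred)
lemma one_F2: "\<one>\<^bsub>F2\<^esub> = []" by (simp add: F2_def)
lemma carrier_F2: "carrier F2 = {w. greduced w}" by (simp add: F2_def reduced_greduced)

lemma prod_encode_eq_iff: "prod_encode x = prod_encode y \<longleftrightarrow> x = y"
  by (metis prod_encode_inverse)

locale aut2cfg =
  fixes A :: "(nat, 'a, f2_letter list) gaut"
  assumes wf: "wf_gaut F2 A"
begin

definition "Sopt = insert None (Some ` alphabet A)"

definition "Tset = {(q, s, q1, m). q \<in> states A \<and> s \<in> Sopt \<and> (q1, m) \<in> delta A q s}"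

lemma finS: "finite Sopt" using wf by (simp add: Sopt_def wf_gaut_def)

lemma Sopt_iff: "s \<in> Sopt \<longleftrightarrow> (s = None \<or> (\<exists>a\<in>alphabet A. s = Some a))"
  by (auto simp: Sopt_def)

lemma delta_empty: "\<not> (q \<in> states A \<and> s \<in> Sopt) \<Longrightarrow> delta A q s = {}"
proof -
  assume a: "\<not> (q \<in> states A \<and> s \<in> Sopt)"
  have "\<forall>q s. \<not> (q \<in> states A \<and> (s = None \<or> (\<exists>a \<in> alphabet A. s = Some a))) \<longrightarrow> delta A q s = {}"
    using wf unfolding wf_gaut_def by blast
  then show ?thesis using a unfolding Sopt_iff by blast
qed

lemma delta_fin: "q \<in> states A \<Longrightarrow> s \<in> Sopt \<Longrightarrow> finite (delta A q s) \<and> delta A q s \<subseteq> states A \<times> carrier F2"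
  using wf unfolding wf_gaut_def Sopt_def by auto

lemma finT: "finite Tset"
proof -
  have "Tset = (\<lambda>(p, r). (fst p, snd p, fst r, snd r)) ` (SIGMA p : states A \<times> Sopt. delta A (fst p) (snd p))"
    unfolding Tset_def by force
  moreover have "finite (SIGMA p : states A \<times> Sopt. delta A (fst p) (snd p))"
    using wf finS delta_fin by (intro finite_SigmaI) (auto simp: wf_gaut_def)
  ultimately show ?thesis by simp
qed

definition "NT = card Tset"
definition "tr = (SOME h. bij_betw h {0..<NT} Tset)"

lemma tr_bij: "bij_betw tr {0..<NT} Tset"
  unfolding tr_def NT_def using someI_ex[OF ex_bij_betw_nat_finite[OF finT]] by simp

lemma tr_in: "t < NT \<Longrightarrow> tr t \<in> Tset"
  using tr_bij by (auto simp: bij_betw_def)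

lemma tr_ex: "x \<in> Tset \<Longrightarrow> \<exists>t<NT. tr t = x"
  using tr_bij by (force simp: bij_betw_def)

definition "src t = fst (tr t)"
definition "lab t = fst (snd (tr t))"
definition "tgt t = fst (snd (snd (tr t)))"
definition "msg t = snd (snd (snd (tr t)))"

lemma tr_props: "t < NT \<Longrightarrow> src t \<in> states A \<and> lab t \<in> Sopt \<and> (tgt t, msg t) \<in> delta A (src t) (lab t)"
  using tr_in[of t] by (auto simp: Tset_def src_def lab_def tgt_def msg_def)

definition Main :: "nat \<Rightarrow> nat" where "Main q = 2 * q"
definition Mid :: "nat \<Rightarrow> nat \<Rightarrow> nat" where "Mid t i = Suc (2 * prod_encode (t, i))"

lemma Main_inj[simp]: "Main q = Main q' \<longleftrightarrow> q = q'" by (simp add: Main_def)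
lemma Mid_inj[simp]: "Mid t i = Mid t' i' \<longleftrightarrow> t = t' \<and> i = i'" by (simp add: Mid_def prod_encode_eq_iff)
lemma Main_Mid[simp]: "Main q \<noteq> Mid t i" "Mid t i \<noteq> Main q"
  by (simp_all add: Main_def Mid_def) presburger+

definition "pos t i = (if i = 0 then Main (src t) else if i = length (msg t) then Main (tgt t) else Mid t i)"

definition "tedges t = (if msg t = [] then {(Main (src t), lab t, None, Main (tgt t))}
   else (\<lambda>i. (pos t i, if i = 0 then lab t else None, Some (msg t ! i), pos t (Suc i))) ` {..<length (msg t)})"

definition "Eset = (\<Union>t\<in>{..<NT}. tedges t)"

definition E :: "nat \<Rightarrow> 'a option \<Rightarrow> f2_letter option \<Rightarrow> nat \<Rightarrow> bool" where
  "E u s lo v \<longleftrightarrow> (u, s, lo, v) \<in> Eset"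

lemma finE: "finite Eset" unfolding Eset_def tedges_def by auto

lemma E_cases:
  assumes "E u s lo v"
  obtains t where "t < NT" "msg t = []" "u = Main (src t)" "s = lab t" "lo = None" "v = Main (tgt t)"
  | t i where "t < NT" "i < length (msg t)" "u = pos t i" "s = (if i = 0 then lab t else None)"
      "lo = Some (msg t ! i)" "v = pos t (Suc i)"
  using assms unfolding E_def Eset_def tedges_def by (auto split: if_splits)

definition "Vt = Main ` states A \<union> (\<Union>t\<in>{..<NT}. insert (Main (tgt t)) (pos t ` {..length (msg t)}))"

lemma finV: "finite Vt" unfolding Vt_def using wf by (auto simp: wf_gaut_def)

lemma pos_V: "t < NT \<Longrightarrow> i \<le> length (msg t) \<Longrightarrow> pos t i \<in> Vt"
  unfolding Vt_def by blast

lemma E_V: "E u s lo v \<Longrightarrow> u \<in> Vt \<and> v \<in> Vt"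
proof (elim E_cases)
  fix t assume "t < NT" "u = Main (src t)" "v = Main (tgt t)"
  then show ?thesis using tr_props[of t] unfolding Vt_def by blast
next
  fix t i assume "t < NT" "i < length (msg t)" "u = pos t i" "v = pos t (Suc i)"
  then show ?thesis using pos_V by simp
qed

lemma E_lab: "E u s lo v \<Longrightarrow> s \<in> Sopt"
  by (elim E_cases) (auto dest: tr_props simp: Sopt_def)

lemma trans_walk:
  assumes "(q1, m) \<in> delta A q s"
  shows "\<exists>n. walk E (Main q) (ol s) m n (Main q1)"
proof -
  have qs: "q \<in> states A" "s \<in> Sopt" using assms delta_empty by blast+
  then obtain t where t: "t < NT" "tr t = (q, s, q1, m)" using tr_ex[of "(q, s, q1, m)"] assms
    by (auto simp: Tset_def)
  then have st: "src t = q" "lab t = s" "tgt t = q1" "msg t = m" by (auto simp: src_def lab_def tgt_def msg_def)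
  show ?thesis
  proof (cases "m = []")
    case True
    then have "E (Main q) s None (Main q1)" using t st unfolding E_def Eset_def tedges_def by force
    then show ?thesis using walk_one[of E "Main q" s None "Main q1"] True by auto
  next
    case False
    have chain: "\<forall>i. i \<le> length m \<longrightarrow> length m - i = d \<longrightarrow>
       walk E (pos t i) (if i = 0 then ol s else []) (drop i m) d (Main q1)" for d
    proof (induction d)
      case 0
      show ?case
      proof (intro allI impI)
        fix i assume "i \<le> length m" "length m - i = 0"
        then have "i = length m" by simp
        then show "walk E (pos t i) (if i = 0 then ol s else []) (drop i m) 0 (Main q1)"
          using False st by (auto simp: pos_def intro: walk.wrefl)
      qed
    next
      case (Suc d)
      show ?case
      proof (intro allI impI)
        fix i assume i: "i \<le> length m" "length m - i = Suc d"
        then have il: "i < length m" by simp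
        have e: "E (pos t i) (if i = 0 then s else None) (Some (m ! i)) (pos t (Suc i))"
          unfolding E_def Eset_def tedges_def using t st False il by force
        have w: "walk E (pos t (Suc i)) [] (drop (Suc i) m) d (Main q1)"
          using Suc.IH[rule_format, of "Suc i"] i by simp
        have "walk E (pos t i) (ol (if i = 0 then s else None) @ []) (ol (Some (m ! i)) @ drop (Suc i) m) (Suc d) (Main q1)"
          by (rule walk.wstep[OF e w])
        moreover have "ol (if i = 0 then s else None) = (if i = 0 then ol s else [])" by simp
        moreover have "ol (Some (m ! i)) @ drop (Suc i) m = drop i m" using il by (simp add: Cons_nth_drop_Suc)
        ultimately show "walk E (pos t i) (if i = 0 then ol s else []) (drop i m) (Suc d) (Main q1)" by simp
      qed
    qed
    have "walk E (pos t 0) (ol s) m (length m) (Main q1)" using chain[of "length m", rule_format, of 0] by simp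
    then show ?thesis using st by (auto simp: pos_def)
  qed
qed

lemma comp_walk:
  "comp F2 A q w x n q' x' \<Longrightarrow> greduced x \<Longrightarrow> \<exists>l n'. walk E (Main q) w l n' (Main q') \<and> x' = gred (x @ l)"
proof (induction rule: comp.induct)
  case (stop q x)
  then show ?case using walk.wrefl[of E "Main q"] by (auto simp: gred_greduced)
next
  case (read q1 m q a w x k q' x')
  have r: "greduced (x \<otimes>\<^bsub>F2\<^esub> m)" by (simp add: mult_F2 reduce_gred greduced_gred)
  obtain l n' where l: "walk E (Main q1) w l n' (Main q')" "x' = gred ((x \<otimes>\<^bsub>F2\<^esub> m) @ l)"
    using read.IH[OF r] by blast
  obtain n1 where "walk E (Main q) (ol (Some a)) m n1 (Main q1)" using trans_walk[OF read.hyps(1)] by blast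
  from walk_trans[OF this l(1)] have "walk E (Main q) (a # w) (m @ l) (n1 + n') (Main q')" by simp
  moreover have "x' = gred (x @ m @ l)" using l(2)
    by (simp add: mult_F2 reduce_gred) (metis append_assoc gred_append_left)
  ultimately show ?case by blast
next
  case (eps q1 m q w x k q' x')
  have r: "greduced (x \<otimes>\<^bsub>F2\<^esub> m)" by (simp add: mult_F2 reduce_gred greduced_gred)
  obtain l n' where l: "walk E (Main q1) w l n' (Main q')" "x' = gred ((x \<otimes>\<^bsub>F2\<^esub> m) @ l)"
    using eps.IH[OF r] by blast
  obtain n1 where "walk E (Main q) (ol None) m n1 (Main q1)" using trans_walk[OF eps.hyps(1)] by blast
  from walk_trans[OF this l(1)] have "walk E (Main q) w (m @ l) (n1 + n') (Main q')" by simp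
  moreover have "x' = gred (x @ m @ l)" using l(2)
    by (simp add: mult_F2 reduce_gred) (metis append_assoc gred_append_left)
  ultimately show ?case by blast
qed

lemma comp_ol:
  assumes "(q1, m) \<in> delta A q s" "comp F2 A q1 w (gred (x @ m)) k q' x'"
  shows "comp F2 A q (ol s @ w) x (Suc k) q' x'"
proof (cases s)
  case None
  have "comp F2 A q w x (Suc k) q' x'"
    by (rule comp.eps[OF assms(1)[unfolded None]]) (simp add: mult_F2' assms(2))
  then show ?thesis using None by simp
next
  case (Some a)
  have "comp F2 A q (a # w) x (Suc k) q' x'"
    by (rule comp.read[OF assms(1)[unfolded Some]]) (simp add: mult_F2' assms(2))
  then show ?thesis using Some by simp
qed

lemma walk_comp_gen:
  assumes "walk E u w l n v" "v = Main q'"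
  shows "(\<forall>q. u = Main q \<longrightarrow> (\<forall>x. greduced x \<longrightarrow> (\<exists>k. comp F2 A q w x k q' (gred (x @ l)))))
    \<and> (\<forall>t i. t < NT \<longrightarrow> 0 < i \<longrightarrow> i < length (msg t) \<longrightarrow> u = Mid t i \<longrightarrow>
        (\<exists>l'. l = drop i (msg t) @ l' \<and> (\<forall>x. greduced x \<longrightarrow> (\<exists>k. comp F2 A (tgt t) w x k q' (gred (x @ l'))))))"
  using assms
proof (induction rule: walk.induct)
  case (wrefl u)
  then show ?case by (auto simp: gred_greduced intro: comp.stop)
next
  case (wstep u s lo u' w l n v)
  note IH = wstep.IH[OF wstep.prems]
  from wstep.hyps(1) show ?case
  proof (cases rule: E_cases)
    case (1 t)
    have d: "(tgt t, msg t) \<in> delta A (src t) (lab t)" using tr_props[OF 1(1)] by simp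
    show ?thesis
    proof (intro conjI allI impI)
      fix q and x :: "f2_letter list" assume "u = Main q" "greduced x"
      then have q: "q = src t" using 1 by simp
      have "greduced (gred (x @ msg t))" by (rule greduced_gred)
      then obtain k where "comp F2 A (tgt t) w (gred (x @ msg t)) k q' (gred (gred (x @ msg t) @ l))"
        using IH 1 by auto
      then have "comp F2 A q (ol s @ w) x (Suc k) q' (gred (gred (x @ msg t) @ l))"
        using comp_ol[OF d] q 1 by simp
      moreover have "gred (gred (x @ msg t) @ l) = gred (x @ ol lo @ l)" using 1 gred_append_left[of x l] by simp
      ultimately show "\<exists>k. comp F2 A q (ol s @ w) x k q' (gred (x @ ol lo @ l))" by auto
    next
      fix t' i assume "u = Mid t' i"
      then show "\<exists>l'. ol lo @ l = drop i (msg t') @ l' \<and> (\<forall>x. greduced x \<longrightarrow> (\<exists>k. comp F2 A (tgt t') (ol s @ w) x k q' (gred (x @ l'))))"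
        using 1 by simp
    qed
  next
    case (2 t i)
    have d: "(tgt t, msg t) \<in> delta A (src t) (lab t)" using tr_props[OF 2(1)] by simp
    show ?thesis
    proof (intro conjI allI impI)
      fix q and x :: "f2_letter list" assume uq: "u = Main q" and x: "greduced x"
      have i0: "i = 0" using uq 2 by (auto simp: pos_def split: if_splits)
      then have q: "q = src t" "s = lab t" "lo = Some (msg t ! 0)" using uq 2 by (auto simp: pos_def)
      have rx: "greduced (gred (x @ msg t))" by (rule greduced_gred)
      show "\<exists>k. comp F2 A q (ol s @ w) x k q' (gred (x @ ol lo @ l))"
      proof (cases "length (msg t) = 1")
        case True
        then have "u' = Main (tgt t)" using 2 i0 by (simp add: pos_def)
        then obtain k where "comp F2 A (tgt t) w (gred (x @ msg t)) k q' (gred (gred (x @ msg t) @ l))"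
          using IH rx by auto
        then have "comp F2 A q (ol s @ w) x (Suc k) q' (gred (gred (x @ msg t) @ l))"
          using comp_ol[OF d] q by simp
        moreover have "msg t = [msg t ! 0]" using True by (cases "msg t") auto
        moreover have "gred (gred (x @ msg t) @ l) = gred (x @ msg t @ l)"
          by (metis append_assoc gred_append_left)
        ultimately show ?thesis using q by (metis append_Cons append_Nil ol_simps(2))
      next
        case False
        then have "u' = Mid t 1" using 2 i0 by (simp add: pos_def)
        moreover have "1 < length (msg t)"
        proof -
          have "0 < length (msg t)" using 2(2) i0 by simp
          then show ?thesis using False by linarith
        qed
        ultimately obtain l' where l': "l = drop 1 (msg t) @ l'"
          "\<And>x. greduced x \<Longrightarrow> \<exists>k. comp F2 A (tgt t) w x k q' (gred (x @ l'))"
          using IH 2(1) by force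
        obtain k where "comp F2 A (tgt t) w (gred (x @ msg t)) k q' (gred (gred (x @ msg t) @ l'))"
          using l'(2)[OF rx] by blast
        then have "comp F2 A q (ol s @ w) x (Suc k) q' (gred (gred (x @ msg t) @ l'))"
          using comp_ol[OF d] q by simp
        moreover have "gred (gred (x @ msg t) @ l') = gred (x @ msg t @ l')"
          by (metis append_assoc gred_append_left)
        moreover have "ol lo @ l = msg t @ l'" using q l'(1) 2(2) i0
          by (simp add: Cons_nth_drop_Suc)
        ultimately show ?thesis by metis
      qed
    next
      fix t' i' assume t': "t' < NT" "0 < i'" "i' < length (msg t')" "u = Mid t' i'"
      have "i \<noteq> 0" "i \<noteq> length (msg t)" using t' 2 by (auto simp: pos_def split: if_splits)
      then have "Mid t i = Mid t' i'" using t' 2 by (simp add: pos_def)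
      then have tt: "t = t'" "i = i'" by auto
      have sl: "s = None" "lo = Some (msg t ! i)" using 2 \<open>i \<noteq> 0\<close> by auto
      show "\<exists>l'. ol lo @ l = drop i' (msg t') @ l' \<and> (\<forall>x. greduced x \<longrightarrow> (\<exists>k. comp F2 A (tgt t') (ol s @ w) x k q' (gred (x @ l'))))"
      proof (cases "Suc i = length (msg t)")
        case True
        then have "u' = Main (tgt t)" using 2(6) by (auto simp: pos_def)
        moreover have "drop i (msg t) = [msg t ! i]" using True
          by (metis Cons_nth_drop_Suc drop_all le_refl lessI)
        ultimately show ?thesis using IH sl tt by auto
      next
        case False
        then have "u' = Mid t (Suc i)" using 2 by (simp add: pos_def)
        moreover have "Suc i < length (msg t)" using False 2 by simp
        ultimately obtain l' where l': "l = drop (Suc i) (msg t) @ l'"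
          "\<And>x. greduced x \<Longrightarrow> \<exists>k. comp F2 A (tgt t) w x k q' (gred (x @ l'))"
          using IH 2(1) by force
        moreover have "msg t ! i # drop (Suc i) (msg t) = drop i (msg t)" using 2(2) by (simp add: Cons_nth_drop_Suc)
        ultimately show ?thesis using sl tt by (metis append_Cons ol_simps(1,2) self_append_conv2)
      qed
    qed
  qed
qed

lemma walk_comp:
  "walk E (Main q) w l n (Main q') \<Longrightarrow> greduced x \<Longrightarrow> \<exists>k. comp F2 A q w x k q' (gred (x @ l))"
  using walk_comp_gen by blast

lemma lang_walk1:
  "w \<in> gaut_lang F2 A \<Longrightarrow> \<exists>f\<in>acc A. \<exists>l n. walk E (Main (init A)) w l n (Main f) \<and> gred l = []"
proof -
  assume "w \<in> gaut_lang F2 A"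
  then obtain k f where "f \<in> acc A" "comp F2 A (init A) w [] k f []"
    by (auto simp: gaut_lang_def accepts_in_def one_F2)
  then show ?thesis
    using comp_walk[of "init A" w "[]" k f "[]"] by fastforce
qed

lemma lang_walk2:
  "f \<in> acc A \<Longrightarrow> walk E (Main (init A)) w l n (Main f) \<Longrightarrow> gred l = [] \<Longrightarrow> w \<in> gaut_lang F2 A"
  using walk_comp[of "init A" w l n f "[]"] by (auto simp: gaut_lang_def accepts_in_def one_F2)

end


context aut2cfg
begin

definition NN :: "nat \<Rightarrow> nat \<Rightarrow> nat" where "NN u v = Suc (prod_encode (u, v))"

lemma NN_inj[simp]: "NN u v = NN u' v' \<longleftrightarrow> u = u' \<and> v = v'"
  by (simp add: NN_def prod_encode_eq_iff)
lemma NN_0[simp]: "NN u v \<noteq> 0" "0 \<noteq> NN u v" by (simp_all add: NN_def)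

definition "PR1 = {(0, [Inl (NN (Main (init A)) (Main f))]) | f. f \<in> acc A}"
definition "PR2 = {(NN u u, []) | u. u \<in> Vt}"
definition "PR3 = {(NN u v, [Inl (NN u w), Inl (NN w v)]) | u v w. u \<in> Vt \<and> v \<in> Vt \<and> w \<in> Vt}"
definition "PR4 = {(NN u v, map Inr (ol s) @ [Inl (NN u' v)]) | u s u' v. E u s None u' \<and> v \<in> Vt}"
definition "PR5 = {(NN u v, map Inr (ol s1) @ [Inl (NN u' v')] @ map Inr (ol s2)) | u s1 x u' v' s2 y v.
    E u s1 (Some x) u' \<and> E v' s2 (Some y) v \<and> gcancel x y}"

definition "Prods = PR1 \<union> PR2 \<union> PR3 \<union> PR4 \<union> PR5"

lemma W2G:
  "walk E u w l n v \<Longrightarrow> gred l = [] \<Longrightarrow> u \<in> Vt \<Longrightarrow> v \<in> Vt \<Longrightarrow> genl Prods [Inl (NN u v)] w"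
proof (induction n arbitrary: u w l v rule: less_induct)
  case (less n)
  show ?case
  proof (cases n)
    case 0
    then have "u = v" "w = []" using less.prems(1) by (auto elim: walk.cases)
    then show ?thesis using less.prems
      by (intro genl_single_nt[of _ "[]"]) (auto simp: Prods_def PR2_def intro: genl.gnil)
  next
    case (Suc n')
    from less.prems(1) obtain s lo u' w' l' where st: "E u s lo u'" "walk E u' w' l' n' v"
      "w = ol s @ w'" "l = ol lo @ l'"
      using Suc by (cases rule: walk.cases) auto
    have u'V: "u' \<in> Vt" using E_V[OF st(1)] by simp
    show ?thesis
    proof (cases lo)
      case None
      have g: "genl Prods [Inl (NN u' v)] w'"
        using less.IH[of n' u' w' l' v] st None less.prems Suc u'V by simp
      have "(NN u v, map Inr (ol s) @ [Inl (NN u' v)]) \<in> Prods"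
        using st None less.prems by (auto simp: Prods_def PR4_def)
      moreover have "genl Prods (map Inr (ol s) @ [Inl (NN u' v)]) (ol s @ w')"
        by (rule genl_append[OF genl_map_Inr g])
      ultimately show ?thesis using st by (simp add: genl_single_nt)
    next
      case (Some x)
      then have "gred (x # l') = []" using st less.prems by simp
      then obtain u1 v1 where l': "l' = u1 @ ginv x # v1" "gred u1 = []" "gred v1 = []"
        using gred_Nil_decomp by blast
      obtain m w1 w2 n1 n2 where sp: "w' = w1 @ w2" "n' = n1 + n2" "walk E u' w1 u1 n1 m"
        "walk E m w2 (ginv x # v1) n2 v"
        using walk_split[of E u' w' u1 "ginv x # v1" n' v] st l' by blast
      obtain m1 m2 s2 w21 w22 n21 n22 where sp2: "walk E m w21 [] n21 m1" "E m1 s2 (Some (ginv x)) m2"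
        "walk E m2 w22 v1 n22 v" "w2 = w21 @ ol s2 @ w22" "n2 = n21 + Suc n22"
        using walk_first[OF sp(4)] by blast
      have wa: "walk E u' (w1 @ w21) u1 (n1 + n21) m1"
        using walk_trans[OF sp(3) sp2(1)] by simp
      have m12: "m1 \<in> Vt" "m2 \<in> Vt" using E_V[OF sp2(2)] by auto
      have g1: "genl Prods [Inl (NN u' m1)] (w1 @ w21)"
        using less.IH[of "n1 + n21" u' "w1 @ w21" u1 m1] wa l' u'V m12 Suc sp sp2 by simp
      have g2: "genl Prods [Inl (NN m2 v)] w22"
        using less.IH[of n22 m2 w22 v1 v] sp2 l' m12 less.prems Suc sp by simp
      have gc: "gcancel x (ginv x)" by (simp add: gcancel_iff)
      have e1: "E u s (Some x) u'" using st(1) Some by simp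
      have "(NN u m2, map Inr (ol s) @ [Inl (NN u' m1)] @ map Inr (ol s2)) \<in> PR5"
        unfolding PR5_def using e1 sp2(2) gc by blast
      then have "(NN u m2, map Inr (ol s) @ [Inl (NN u' m1)] @ map Inr (ol s2)) \<in> Prods"
        unfolding Prods_def by blast
      moreover have "genl Prods (map Inr (ol s) @ [Inl (NN u' m1)] @ map Inr (ol s2)) (ol s @ (w1 @ w21) @ ol s2)"
        by (intro genl_append genl_map_Inr g1)
      ultimately have g3: "genl Prods [Inl (NN u m2)] (ol s @ (w1 @ w21) @ ol s2)"
        by (rule genl_single_nt)
      have "(NN u v, [Inl (NN u m2), Inl (NN m2 v)]) \<in> Prods"
        unfolding Prods_def PR3_def using less.prems m12 by auto
      moreover have "genl Prods [Inl (NN u m2), Inl (NN m2 v)] ((ol s @ (w1 @ w21) @ ol s2) @ w22)"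
        using genl_append[OF g3 g2] by simp
      ultimately have "genl Prods [Inl (NN u v)] ((ol s @ (w1 @ w21) @ ol s2) @ w22)"
        by (rule genl_single_nt)
      then show ?thesis using st sp sp2 by simp
    qed
  qed
qed

definition semN :: "nat \<Rightarrow> 'a list \<Rightarrow> bool" where
  "semN N w \<longleftrightarrow> (N = 0 \<and> (\<exists>f\<in>acc A. \<exists>l n. walk E (Main (init A)) w l n (Main f) \<and> gred l = []))
     \<or> (\<exists>u v. N = NN u v \<and> (\<exists>l n. walk E u w l n v \<and> gred l = []))"

fun semS :: "(nat + 'a) \<Rightarrow> 'a list \<Rightarrow> bool" where
  "semS (Inl N) w = semN N w"
| "semS (Inr a) w = (w = [a])"

fun semL :: "(nat + 'a) list \<Rightarrow> 'a list \<Rightarrow> bool" where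
  "semL [] w = (w = [])"
| "semL (x # \<alpha>) w = (\<exists>w1 w2. w = w1 @ w2 \<and> semS x w1 \<and> semL \<alpha> w2)"

lemma semL_append: "semL (\<alpha> @ \<beta>) w \<longleftrightarrow> (\<exists>w1 w2. w = w1 @ w2 \<and> semL \<alpha> w1 \<and> semL \<beta> w2)"
proof (induction \<alpha> arbitrary: w)
  case (Cons x \<alpha>)
  show ?case
  proof
    assume "semL ((x # \<alpha>) @ \<beta>) w"
    then obtain w1 w2 where a: "w = w1 @ w2" "semS x w1" "semL (\<alpha> @ \<beta>) w2" by auto
    then obtain w21 w22 where b: "w2 = w21 @ w22" "semL \<alpha> w21" "semL \<beta> w22" using Cons.IH by blast
    have "semL (x # \<alpha>) (w1 @ w21)" using a b by auto
    moreover have "w = (w1 @ w21) @ w22" using a b by simp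
    ultimately show "\<exists>w1 w2. w = w1 @ w2 \<and> semL (x # \<alpha>) w1 \<and> semL \<beta> w2" using b by blast
  next
    assume "\<exists>w1 w2. w = w1 @ w2 \<and> semL (x # \<alpha>) w1 \<and> semL \<beta> w2"
    then obtain w1 w2 where a: "w = w1 @ w2" "semL (x # \<alpha>) w1" "semL \<beta> w2" by blast
    then obtain w11 w12 where b: "w1 = w11 @ w12" "semS x w11" "semL \<alpha> w12" by auto
    have "semL (\<alpha> @ \<beta>) (w12 @ w2)" using Cons.IH a b by blast
    moreover have "w = w11 @ (w12 @ w2)" using a b by simp
    ultimately show "semL ((x # \<alpha>) @ \<beta>) w" using b by auto
  qed
qed simp

lemma semL_map_Inr: "semL (map Inr xs) w \<longleftrightarrow> w = xs"
  by (induction xs arbitrary: w) auto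

lemma semL_single: "semL [x] w \<longleftrightarrow> semS x w" by simp

lemma G2W: "genl Prods \<alpha> w \<Longrightarrow> semL \<alpha> w"
proof (induction rule: genl.induct)
  case gnil
  then show ?case by simp
next
  case (gterm \<alpha> w a)
  have "semS (Inr a) [a]" by simp
  then show ?case using gterm(2) unfolding semL.simps by (metis append_Cons append_Nil)
next
  case (gnt N \<gamma> u \<alpha> v)
  have "semN N u"
  proof -
    consider "(N, \<gamma>) \<in> PR1" | "(N, \<gamma>) \<in> PR2" | "(N, \<gamma>) \<in> PR3" | "(N, \<gamma>) \<in> PR4" | "(N, \<gamma>) \<in> PR5"
      using gnt(1) unfolding Prods_def by blast
    then show ?thesis
    proof cases
      case 1
      then obtain f where f: "f \<in> acc A" "N = 0" "\<gamma> = [Inl (NN (Main (init A)) (Main f))]"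
        by (auto simp: PR1_def)
      then have "semN (NN (Main (init A)) (Main f)) u" using gnt(4) by simp
      then obtain l n where "walk E (Main (init A)) u l n (Main f)" "gred l = []" unfolding semN_def by auto
      then show ?thesis using f unfolding semN_def by blast
    next
      case 2
      then obtain u0 where N: "N = NN u0 u0" "\<gamma> = []" by (auto simp: PR2_def)
      then have "u = []" using gnt(4) by simp
      then have "walk E u0 u [] 0 u0" "gred [] = []" by (auto intro: walk.wrefl)
      then show ?thesis using N unfolding semN_def by blast
    next
      case 3
      then obtain u0 v0 w0 where N: "N = NN u0 v0" "\<gamma> = [Inl (NN u0 w0)] @ [Inl (NN w0 v0)]"
        by (auto simp: PR3_def)
      obtain u1 u2 where uu: "u = u1 @ u2" "semL [Inl (NN u0 w0)] u1" "semL [Inl (NN w0 v0)] u2"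
        using gnt(4) N(2) semL_append by blast
      have "semN (NN u0 w0) u1" "semN (NN w0 v0) u2" using uu by simp_all
      then obtain l1 n1 l2 n2 where "walk E u0 u1 l1 n1 w0" "gred l1 = []"
        "walk E w0 u2 l2 n2 v0" "gred l2 = []"
        unfolding semN_def by auto
      moreover have "gred (l1 @ l2) = []" using calculation gred_append[of l1 l2] by simp
      moreover have "walk E u0 (u1 @ u2) (l1 @ l2) (n1 + n2) v0"
        using calculation(1,3) by (rule walk_trans)
      ultimately show ?thesis using N uu(1) unfolding semN_def by blast
    next
      case 4
      then obtain u0 s u' v0 where N: "N = NN u0 v0" "\<gamma> = map Inr (ol s) @ [Inl (NN u' v0)]" "E u0 s None u'"
        by (auto simp: PR4_def)
      obtain w1 w2 where ww: "u = w1 @ w2" "semL (map Inr (ol s)) w1" "semL [Inl (NN u' v0)] w2"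
        using gnt(4) N(2) semL_append by blast
      have "semN (NN u' v0) w2" using ww(3) by simp
      then obtain l n where wl: "walk E u' w2 l n v0" "gred l = []" unfolding semN_def by auto
      have "w1 = ol s" using ww(2) semL_map_Inr by blast
      have "walk E u0 (ol s @ w2) (ol None @ l) (Suc n) v0" by (rule walk.wstep[of E u0 s None u', OF N(3) wl(1)])
      then show ?thesis using N(1) wl(2) ww(1) \<open>w1 = ol s\<close> unfolding semN_def by auto
    next
      case 5
      then obtain u0 s1 x u' v' s2 y v0 where N: "N = NN u0 v0"
        "\<gamma> = map Inr (ol s1) @ [Inl (NN u' v')] @ map Inr (ol s2)"
        "E u0 s1 (Some x) u'" "E v' s2 (Some y) v0" "gcancel x y"
        by (auto simp: PR5_def)
      obtain w1 w23 where ww: "u = w1 @ w23" "semL (map Inr (ol s1)) w1" "semL ([Inl (NN u' v')] @ map Inr (ol s2)) w23"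
        using gnt(4) N(2) semL_append by blast
      obtain w2 w3 where ww2: "w23 = w2 @ w3" "semL [Inl (NN u' v')] w2" "semL (map Inr (ol s2)) w3"
        using ww(3) semL_append by blast
      have "semN (NN u' v') w2" using ww2(2) by simp
      then obtain l n where u: "walk E u' w2 l n v'" "gred l = []" unfolding semN_def by auto
      have w13: "w1 = ol s1" "w3 = ol s2" using ww(2) ww2(3) semL_map_Inr by blast+
      have "walk E u' (w2 @ ol s2) (l @ ol (Some y)) (n + 1) v0"
        using walk_trans[OF u(1) walk_one[of E v' s2 "Some y" v0, OF N(4)]] by simp
      from walk.wstep[of E u0 s1 "Some x" u', OF N(3) this]
      have "walk E u0 (ol s1 @ w2 @ ol s2) (x # l @ [y]) (Suc (n + 1)) v0" by simp
      moreover have "gred (x # l @ [y]) = []"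
        using gred_wrap[OF u(2), of x "[]"] N(5) by (simp add: gcancel_iff)
      moreover have "u = ol s1 @ w2 @ ol s2" using ww ww2 w13 by simp
      ultimately show ?thesis using N(1) unfolding semN_def by blast
    qed
  qed
  then have "semS (Inl N) u" by simp
  then show ?case using gnt(5) unfolding semL.simps by blast
qed

definition "Gr = \<lparr>nonterms = insert 0 ((\<lambda>(u, v). NN u v) ` (Vt \<times> Vt)), terms = alphabet A,
   prods = Prods, start = 0\<rparr>"

lemma Gr_lang1: "w \<in> cfg_lang Gr \<Longrightarrow> w \<in> gaut_lang F2 A"
proof -
  assume "w \<in> cfg_lang Gr"
  then have "genl Prods [Inl 0] w" by (simp add: cfg_lang_genl Gr_def)
  then have "semN 0 w" using G2W by fastforce
  then show "w \<in> gaut_lang F2 A" by (auto simp: semN_def intro: lang_walk2)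
qed

lemma Gr_lang2: "w \<in> gaut_lang F2 A \<Longrightarrow> w \<in> cfg_lang Gr"
proof -
  assume "w \<in> gaut_lang F2 A"
  then obtain f l n where f: "f \<in> acc A" "walk E (Main (init A)) w l n (Main f)" "gred l = []"
    using lang_walk1 by blast
  have V: "Main (init A) \<in> Vt" "Main f \<in> Vt" using wf f(1) by (auto simp: Vt_def wf_gaut_def)
  have "genl Prods [Inl (NN (Main (init A)) (Main f))] w" using W2G[OF f(2,3) V] .
  moreover have "(0, [Inl (NN (Main (init A)) (Main f))]) \<in> Prods" using f(1) by (auto simp: Prods_def PR1_def)
  ultimately have "genl Prods [Inl 0] w" by (intro genl_single_nt)
  then show "w \<in> cfg_lang Gr" by (simp add: cfg_lang_genl Gr_def)
qed

lemma Gr_lang: "cfg_lang Gr = gaut_lang F2 A"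
  using Gr_lang1 Gr_lang2 by blast

lemma fin_Prods: "finite Prods"
proof -
  have s1: "PR1 \<subseteq> (\<lambda>f. (0, [Inl (NN (Main (init A)) (Main f))])) ` acc A"
  proof
    fix p assume "p \<in> PR1"
    then obtain f where "p = (0, [Inl (NN (Main (init A)) (Main f))])" "f \<in> acc A" by (auto simp: PR1_def)
    then show "p \<in> (\<lambda>f. (0, [Inl (NN (Main (init A)) (Main f))])) ` acc A" by (intro rev_image_eqI)
  qed
  have "finite (acc A)" using wf finite_subset by (auto simp: wf_gaut_def)
  then have 1: "finite PR1" using s1 finite_subset finite_imageI by blast
  have s2: "PR2 \<subseteq> (\<lambda>u. (NN u u, [])) ` Vt"
  proof
    fix p assume "p \<in> PR2"
    then obtain u where "p = (NN u u, [])" "u \<in> Vt" by (auto simp: PR2_def)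
    then show "p \<in> (\<lambda>u. (NN u u, [])) ` Vt" by (intro rev_image_eqI)
  qed
  then have 2: "finite PR2" using finV finite_subset finite_imageI by blast
  have s3: "PR3 \<subseteq> (\<lambda>(u, v, w). (NN u v, [Inl (NN u w), Inl (NN w v)])) ` (Vt \<times> Vt \<times> Vt)"
  proof
    fix p assume "p \<in> PR3"
    then obtain u v w where "p = (NN u v, [Inl (NN u w), Inl (NN w v)])" "u \<in> Vt" "v \<in> Vt" "w \<in> Vt"
      by (auto simp: PR3_def)
    then show "p \<in> (\<lambda>(u, v, w). (NN u v, [Inl (NN u w), Inl (NN w v)])) ` (Vt \<times> Vt \<times> Vt)"
      by (intro rev_image_eqI[of "(u, v, w)"]) auto
  qed
  have "finite (Vt \<times> Vt \<times> Vt)" using finV by simp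
  then have 3: "finite PR3" using s3 finite_subset finite_imageI by blast
  have s4: "PR4 \<subseteq> (\<lambda>((u, s, lo, u'), v). (NN u v, map Inr (ol s) @ [Inl (NN u' v)])) ` (Eset \<times> Vt)"
  proof
    fix p assume "p \<in> PR4"
    then obtain u s u' v where "p = (NN u v, map Inr (ol s) @ [Inl (NN u' v)])" "E u s None u'" "v \<in> Vt"
      by (auto simp: PR4_def)
    then show "p \<in> (\<lambda>((u, s, lo, u'), v). (NN u v, map Inr (ol s) @ [Inl (NN u' v)])) ` (Eset \<times> Vt)"
      by (intro rev_image_eqI[of "((u, s, None, u'), v)"]) (auto simp: E_def)
  qed
  have "finite (Eset \<times> Vt)" using finV finE by simp
  then have 4: "finite PR4" using s4 finite_subset finite_imageI by blast
  have s5: "PR5 \<subseteq> (\<lambda>((u, s1, lo1, u'), (v', s2, lo2, v)). (NN u v, map Inr (ol s1) @ [Inl (NN u' v')] @ map Inr (ol s2))) ` (Eset \<times> Eset)"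
  proof
    fix p assume "p \<in> PR5"
    then obtain u s1 x u' v' s2 y v where "p = (NN u v, map Inr (ol s1) @ [Inl (NN u' v')] @ map Inr (ol s2))"
      "E u s1 (Some x) u'" "E v' s2 (Some y) v"
      by (auto simp: PR5_def)
    then show "p \<in> (\<lambda>((u, s1, lo1, u'), (v', s2, lo2, v)). (NN u v, map Inr (ol s1) @ [Inl (NN u' v')] @ map Inr (ol s2))) ` (Eset \<times> Eset)"
      by (intro rev_image_eqI[of "((u, s1, Some x, u'), (v', s2, Some y, v))"]) (auto simp: E_def)
  qed
  have "finite (Eset \<times> Eset)" using finE by simp
  then have 5: "finite PR5" using s5 finite_subset finite_imageI by blast
  show ?thesis using 1 2 3 4 5 by (simp add: Prods_def)
qed

lemma ol_alph: "s \<in> Sopt \<Longrightarrow> set (ol s) \<subseteq> alphabet A"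
  by (auto simp: Sopt_def)

lemma NN_img: "u \<in> Vt \<Longrightarrow> v \<in> Vt \<Longrightarrow> NN u v \<in> (\<lambda>(u, v). NN u v) ` (Vt \<times> Vt)"
  by force

lemma wf_Gr: "wf_cfg Gr"
proof -
  have V: "Main (init A) \<in> Vt" "\<And>f. f \<in> acc A \<Longrightarrow> Main f \<in> Vt" using wf by (auto simp: Vt_def wf_gaut_def)
  have "\<forall>(N, \<alpha>) \<in> Prods. N \<in> nonterms Gr \<and> (\<forall>s \<in> set \<alpha>. case s of Inl B \<Rightarrow> B \<in> nonterms Gr | Inr a \<Rightarrow> a \<in> terms Gr)"
  proof (intro ballI, clarify)
    fix N \<alpha> assume "(N, \<alpha>) \<in> Prods"
    then consider "(N, \<alpha>) \<in> PR1" | "(N, \<alpha>) \<in> PR2" | "(N, \<alpha>) \<in> PR3" | "(N, \<alpha>) \<in> PR4" | "(N, \<alpha>) \<in> PR5"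
      unfolding Prods_def by blast
    then show "N \<in> nonterms Gr \<and> (\<forall>s \<in> set \<alpha>. case s of Inl B \<Rightarrow> B \<in> nonterms Gr | Inr a \<Rightarrow> a \<in> terms Gr)"
    proof cases
      case 1 then show ?thesis using V by (auto simp: PR1_def Gr_def NN_img)
    next
      case 2 then show ?thesis by (auto simp: PR2_def Gr_def NN_img)
    next
      case 3 then show ?thesis by (auto simp: PR3_def Gr_def NN_img)
    next
      case 4
      then obtain u s u' v where N: "N = NN u v" "\<alpha> = map Inr (ol s) @ [Inl (NN u' v)]" "E u s None u'" "v \<in> Vt"
        by (auto simp: PR4_def)
      have "u \<in> Vt" "u' \<in> Vt" using E_V[OF N(3)] by auto
      moreover have "set (ol s) \<subseteq> alphabet A" using E_lab[OF N(3)] ol_alph by blast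
      ultimately show ?thesis using N by (auto simp: Gr_def NN_img)
    next
      case 5
      then obtain u s1 x u' v' s2 y v where N: "N = NN u v"
        "\<alpha> = map Inr (ol s1) @ [Inl (NN u' v')] @ map Inr (ol s2)"
        "E u s1 (Some x) u'" "E v' s2 (Some y) v"
        by (auto simp: PR5_def)
      have "u \<in> Vt" "u' \<in> Vt" "v' \<in> Vt" "v \<in> Vt" using E_V[OF N(3)] E_V[OF N(4)] by auto
      moreover have "set (ol s1) \<subseteq> alphabet A" "set (ol s2) \<subseteq> alphabet A"
        using E_lab[OF N(3)] E_lab[OF N(4)] ol_alph by blast+
      ultimately show ?thesis using N by (auto simp: Gr_def NN_img)
    qed
  qed
  note H = this
  have fa: "finite (alphabet A)" using wf by (simp add: wf_gaut_def)
  have pg: "prods Gr = Prods" by (simp add: Gr_def)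
  show ?thesis unfolding wf_cfg_def
  proof (intro conjI)
    show "finite (nonterms Gr)" using finV by (simp add: Gr_def)
    show "finite (terms Gr)" using fa by (simp add: Gr_def)
    show "finite (prods Gr)" using fin_Prods by (simp add: Gr_def)
    show "start Gr \<in> nonterms Gr" by (simp add: Gr_def)
    show "\<forall>(N, \<alpha>) \<in> prods Gr. N \<in> nonterms Gr \<and> (\<forall>s \<in> set \<alpha>. case s of Inl B \<Rightarrow> B \<in> nonterms Gr | Inr a \<Rightarrow> a \<in> terms Gr)"
      unfolding pg by (rule H)
  qed
qed

end

lemma weak_sub_CF: "weak_linear_class F2 \<Sigma> \<subseteq> CF \<Sigma>"
proof
  fix L assume "L \<in> weak_linear_class F2 \<Sigma>"
  then obtain A :: "(nat, 'a, f2_letter list) gaut" where A: "wf_gaut F2 A" "alphabet A = \<Sigma>" "gaut_lang F2 A = L"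
    by (auto simp: weak_linear_class_def)
  interpret aut2cfg A by unfold_locales (rule A(1))
  show "L \<in> CF \<Sigma>" unfolding CF_def using wf_Gr Gr_lang A
    by (intro CollectI exI[of _ Gr]) (simp add: Gr_def)
qed


locale cfgwf =
  fixes G :: "(nat, 'a) cfg"
  assumes wf: "wf_cfg G"
begin

definition "Vs = Inl ` nonterms G \<union> Inr ` terms G"
definition "Mx = (\<Sum>p\<in>prods G. length (snd p))"

definition "P' = {(A, \<beta>). A \<in> nonterms G \<and> set \<beta> \<subseteq> Vs \<and> length \<beta> \<le> Mx \<and> \<beta> \<noteq> [] \<and> (\<forall>B. \<beta> \<noteq> [Inl B])
   \<and> (derive1 G)\<^sup>*\<^sup>* [Inl A] \<beta>}"

lemma prod_wf: "(A, \<gamma>) \<in> prods G \<Longrightarrow> A \<in> nonterms G \<and> set \<gamma> \<subseteq> Vs \<and> length \<gamma> \<le> Mx"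
proof -
  assume a: "(A, \<gamma>) \<in> prods G"
  have "A \<in> nonterms G \<and> (\<forall>s \<in> set \<gamma>. case s of Inl B \<Rightarrow> B \<in> nonterms G | Inr a \<Rightarrow> a \<in> terms G)"
    using wf a unfolding wf_cfg_def by blast
  moreover have "length \<gamma> \<le> Mx" unfolding Mx_def
    using member_le_sum[of "(A, \<gamma>)" "prods G" "\<lambda>p. length (snd p)"] a wf by (simp add: wf_cfg_def)
  moreover have "set \<gamma> \<subseteq> Vs"
  proof
    fix s assume "s \<in> set \<gamma>"
    then have "case s of Inl B \<Rightarrow> B \<in> nonterms G | Inr a \<Rightarrow> a \<in> terms G" using calculation(1) by blast
    then show "s \<in> Vs" unfolding Vs_def by (cases s) auto
  qed
  ultimately show ?thesis by blast
qed

lemma finVs: "finite Vs" using wf by (simp add: Vs_def wf_cfg_def)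

lemma finP': "finite P'"
proof -
  have "P' \<subseteq> nonterms G \<times> {\<beta>. set \<beta> \<subseteq> Vs \<and> length \<beta> \<le> Mx}" by (auto simp: P'_def)
  moreover have "finite (nonterms G \<times> {\<beta>. set \<beta> \<subseteq> Vs \<and> length \<beta> \<le> Mx})"
  proof (rule finite_cartesian_product)
    show "finite (nonterms G)" using wf by (simp add: wf_cfg_def)
    show "finite {\<beta>. set \<beta> \<subseteq> Vs \<and> length \<beta> \<le> Mx}" using finVs by (rule finite_lists_length_le)
  qed
  ultimately show ?thesis using finite_subset by blast
qed

lemma genl_P'_derive: "genl P' \<alpha> w \<Longrightarrow> (derive1 G)\<^sup>*\<^sup>* \<alpha> (map Inr w)"
proof (induction rule: genl.induct)
  case gnil
  then show ?case by simp
next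
  case (gterm \<alpha> w a)
  then show ?case using derive1_ctx[of G \<alpha> "map Inr w" "[Inr a]" "[]"] by simp
next
  case (gnt A \<gamma> u \<alpha> v)
  have "(derive1 G)\<^sup>*\<^sup>* [Inl A] \<gamma>" using gnt(1) by (simp add: P'_def)
  then have "(derive1 G)\<^sup>*\<^sup>* (Inl A # \<alpha>) (\<gamma> @ \<alpha>)"
    using derive1_ctx[of G "[Inl A]" \<gamma> "[]" \<alpha>] by simp
  moreover have "(derive1 G)\<^sup>*\<^sup>* (\<gamma> @ \<alpha>) (map Inr u @ \<alpha>)"
    using derive1_ctx[OF gnt(4), of "[]" \<alpha>] by simp
  moreover have "(derive1 G)\<^sup>*\<^sup>* (map Inr u @ \<alpha>) (map Inr u @ map Inr v)"
    using derive1_ctx[OF gnt(5), of "map Inr u" "[]"] by simp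
  ultimately show ?case by simp
qed

lemma genl_P'_ne: "genl P' \<alpha> w \<Longrightarrow> \<alpha> \<noteq> [] \<Longrightarrow> w \<noteq> []"
proof (induction rule: genl.induct)
  case (gnt A \<gamma> u \<alpha> v)
  have "\<gamma> \<noteq> []" using gnt(1) by (simp add: P'_def)
  then show ?case using gnt by simp
qed simp_all

lemma lift_prod:
  assumes A: "(A, \<gamma>) \<in> prods G" and d: "(derive1 G)\<^sup>*\<^sup>* \<gamma> \<beta>" and l: "length \<beta> \<le> length \<gamma>"
    and s: "set \<beta> \<subseteq> set \<gamma>" and g: "genl P' \<beta> u" and u: "u \<noteq> []"
  shows "\<exists>\<delta>. (A, \<delta>) \<in> P' \<and> genl P' \<delta> u"
proof -
  have pw: "A \<in> nonterms G" "set \<gamma> \<subseteq> Vs" "length \<gamma> \<le> Mx" using prod_wf[OF A] by auto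
  have d1: "(derive1 G)\<^sup>*\<^sup>* [Inl A] \<gamma>"
    using A unfolding derive1_def by (intro r_into_rtranclp exI[of _ "[]"]) auto
  have bne: "\<beta> \<noteq> []" using g u by (auto simp: genl_Nil_iff)
  show ?thesis
  proof (cases "\<exists>B. \<beta> = [Inl B]")
    case True
    then obtain B where B: "\<beta> = [Inl B]" by blast
    then obtain \<delta> u1 u2 where "u = u1 @ u2" "(B, \<delta>) \<in> P'" "genl P' \<delta> u1" "genl P' [] u2"
      using g genl_Inl_iff by metis
    then have Bd: "(B, \<delta>) \<in> P'" "genl P' \<delta> u" by (auto simp: genl_Nil_iff)
    have "(derive1 G)\<^sup>*\<^sup>* [Inl A] \<delta>"
      using d1 d B Bd(1) by (auto simp: P'_def)
    then have "(A, \<delta>) \<in> P'" using Bd(1) pw by (auto simp: P'_def)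
    then show ?thesis using Bd by blast
  next
    case False
    have "(A, \<beta>) \<in> P'" using False pw d1 d l s bne unfolding P'_def by auto
    then show ?thesis using g by blast
  qed
qed

lemma complete_P':
  "genl (prods G) \<alpha> w \<Longrightarrow> \<exists>\<beta>. (derive1 G)\<^sup>*\<^sup>* \<alpha> \<beta> \<and> length \<beta> \<le> length \<alpha> \<and> set \<beta> \<subseteq> set \<alpha>
      \<and> genl P' \<beta> w \<and> (w = [] \<longrightarrow> \<beta> = [])"
proof (induction rule: genl.induct)
  case gnil
  then show ?case by (auto intro: genl.gnil)
next
  case (gterm \<alpha> w a)
  then obtain \<beta> where b: "(derive1 G)\<^sup>*\<^sup>* \<alpha> \<beta>" "length \<beta> \<le> length \<alpha>" "set \<beta> \<subseteq> set \<alpha>" "genl P' \<beta> w"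
    by blast
  have "(derive1 G)\<^sup>*\<^sup>* (Inr a # \<alpha>) (Inr a # \<beta>)"
    using derive1_ctx[OF b(1), of "[Inr a]" "[]"] by simp
  then show ?case using b by (intro exI[of _ "Inr a # \<beta>"]) (auto intro: genl.gterm)
next
  case (gnt A \<gamma> u \<alpha> v)
  from gnt.IH(1) obtain \<beta>1 where b1: "(derive1 G)\<^sup>*\<^sup>* \<gamma> \<beta>1" "length \<beta>1 \<le> length \<gamma>" "set \<beta>1 \<subseteq> set \<gamma>"
    "genl P' \<beta>1 u" "u = [] \<longrightarrow> \<beta>1 = []" by blast
  from gnt.IH(2) obtain \<beta>2 where b2: "(derive1 G)\<^sup>*\<^sup>* \<alpha> \<beta>2" "length \<beta>2 \<le> length \<alpha>" "set \<beta>2 \<subseteq> set \<alpha>"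
    "genl P' \<beta>2 v" "v = [] \<longrightarrow> \<beta>2 = []" by blast
  have d2: "(derive1 G)\<^sup>*\<^sup>* (Inl A # \<alpha>) (Inl A # \<beta>2)"
    using derive1_ctx[OF b2(1), of "[Inl A]" "[]"] by simp
  show ?case
  proof (cases "u = []")
    case True
    then have "\<beta>1 = []" using b1 by simp
    have "derive1 G (Inl A # \<alpha>) (\<gamma> @ \<alpha>)"
      unfolding derive1_def using gnt(1) by (intro exI[of _ "[]"] exI[of _ \<alpha>] exI[of _ A] exI[of _ \<gamma>]) auto
    moreover have "(derive1 G)\<^sup>*\<^sup>* (\<gamma> @ \<alpha>) \<alpha>"
      using derive1_ctx[OF b1(1), of "[]" \<alpha>] \<open>\<beta>1 = []\<close> by simp
    ultimately have "(derive1 G)\<^sup>*\<^sup>* (Inl A # \<alpha>) \<beta>2" using b2(1) by (meson converse_rtranclp_into_rtranclp rtranclp_trans)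
    then show ?thesis using b2 True by (intro exI[of _ \<beta>2]) auto
  next
    case False
    obtain \<delta> where "(A, \<delta>) \<in> P'" "genl P' \<delta> u" using lift_prod[OF gnt(1) b1(1-4) False] by blast
    then have "genl P' (Inl A # \<beta>2) (u @ v)" using b2(4) by (intro genl.gnt)
    then show ?thesis using d2 b2 False by (intro exI[of _ "Inl A # \<beta>2"]) auto
  qed
qed

lemma lang_P':
  assumes "w \<in> cfg_lang G" "w \<noteq> []"
  shows "\<exists>\<delta>. (start G, \<delta>) \<in> P' \<and> genl P' \<delta> w"
proof -
  have "genl (prods G) [Inl (start G)] w" using assms(1) by (simp add: cfg_lang_genl)
  then obtain \<gamma> u1 u2 where "w = u1 @ u2" "(start G, \<gamma>) \<in> prods G" "genl (prods G) \<gamma> u1" "genl (prods G) [] u2"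
    using genl_Inl_iff by metis
  then have g: "(start G, \<gamma>) \<in> prods G" "genl (prods G) \<gamma> w" by (auto simp: genl_Nil_iff)
  then obtain \<beta> where "(derive1 G)\<^sup>*\<^sup>* \<gamma> \<beta>" "length \<beta> \<le> length \<gamma>" "set \<beta> \<subseteq> set \<gamma>" "genl P' \<beta> w"
    using complete_P' by blast
  then show ?thesis using lift_prod[OF g(1)] assms(2) by blast
qed

lemma P'_lang: "(start G, \<delta>) \<in> P' \<Longrightarrow> genl P' \<delta> w \<Longrightarrow> w \<in> cfg_lang G"
proof -
  assume a: "(start G, \<delta>) \<in> P'" "genl P' \<delta> w"
  have "(derive1 G)\<^sup>*\<^sup>* [Inl (start G)] \<delta>" using a(1) by (simp add: P'_def)
  moreover have "(derive1 G)\<^sup>*\<^sup>* \<delta> (map Inr w)" using genl_P'_derive[OF a(2)] .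
  ultimately show ?thesis unfolding cfg_lang_def by simp
qed

lemma P'_props: "(A, \<delta>) \<in> P' \<Longrightarrow> \<delta> \<noteq> [] \<and> (\<forall>B. \<delta> \<noteq> [Inl B]) \<and> set \<delta> \<subseteq> Vs \<and> A \<in> nonterms G"
  by (simp add: P'_def)

end


lemma sl_append: "j \<le> m \<Longrightarrow> m \<le> j' \<Longrightarrow>
   take (j' - j) (drop j xs) = take (m - j) (drop j xs) @ take (j' - m) (drop m xs)"
proof -
  assume a: "j \<le> m" "m \<le> j'"
  have "j' - j = (m - j) + (j' - m)" using a by simp
  then have "take (j' - j) (drop j xs) = take (m - j) (drop j xs) @ take (j' - m) (drop (m - j) (drop j xs))"
    by (simp add: take_add)
  also have "drop (m - j) (drop j xs) = drop m xs" using a by simp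
  finally show ?thesis .
qed

lemma sl_single: "m < length xs \<Longrightarrow> take (Suc m - m) (drop m xs) = [xs ! m]"
  by (simp add: Cons_nth_drop_Suc[symmetric])

context cfgwf
begin

definition "K = card P'"
definition "prd = (SOME h. bij_betw h {0..<K} P')"

lemma prd_bij: "bij_betw prd {0..<K} P'"
  unfolding prd_def K_def using someI_ex[OF ex_bij_betw_nat_finite[OF finP']] by simp

lemma prd_in: "k < K \<Longrightarrow> prd k \<in> P'"
  using prd_bij by (auto simp: bij_betw_def)

lemma prd_ex: "p \<in> P' \<Longrightarrow> \<exists>k<K. prd k = p"
  using prd_bij by (force simp: bij_betw_def)

definition "lhs k = fst (prd k)"
definition "rhs k = snd (prd k)"

lemma lr_in: "k < K \<Longrightarrow> (lhs k, rhs k) \<in> P'"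
  using prd_in by (simp add: lhs_def rhs_def)

definition Mq :: "nat \<Rightarrow> nat \<Rightarrow> nat" where "Mq k j = Suc (Suc (prod_encode (k, j)))"
definition ecode :: "nat \<Rightarrow> nat \<Rightarrow> nat" where "ecode k j = Suc (prod_encode (k, j))"

lemma Mq_inj[simp]: "Mq k j = Mq k' j' \<longleftrightarrow> k = k' \<and> j = j'" by (simp add: Mq_def prod_encode_eq_iff)
lemma Mq_ne[simp]: "Mq k j \<noteq> 0" "Mq k j \<noteq> 1" "0 \<noteq> Mq k j" "1 \<noteq> Mq k j" by (simp_all add: Mq_def)
lemma ecode_inj[simp]: "ecode k j = ecode k' j' \<longleftrightarrow> k = k' \<and> j = j'" by (simp add: ecode_def prod_encode_eq_iff)
lemma ecode_ne[simp]: "ecode k j \<noteq> 0" "0 \<noteq> ecode k j" by (simp_all add: ecode_def)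

definition astep :: "nat \<Rightarrow> 'a option \<Rightarrow> (nat \<times> bool) option \<Rightarrow> nat \<Rightarrow> bool" where
  "astep q s lo q' \<longleftrightarrow>
     (\<exists>k. q = 0 \<and> s = None \<and> lo = Some (0, False) \<and> k < K \<and> lhs k = start G \<and> q' = Mq k 0)
   \<or> (\<exists>k j a. k < K \<and> j < length (rhs k) \<and> rhs k ! j = Inr a \<and> a \<in> terms G \<and> q = Mq k j \<and> s = Some a
        \<and> lo = None \<and> q' = Mq k (Suc j))
   \<or> (\<exists>k j k'. k < K \<and> j < length (rhs k) \<and> k' < K \<and> rhs k ! j = Inl (lhs k') \<and> q = Mq k j \<and> s = None
        \<and> lo = Some (ecode k j, False) \<and> q' = Mq k' 0)
   \<or> (\<exists>k k' j'. k < K \<and> k' < K \<and> j' < length (rhs k') \<and> rhs k' ! j' = Inl (lhs k) \<and> q = Mq k (length (rhs k))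
        \<and> s = None \<and> lo = Some (ecode k' j', True) \<and> q' = Mq k' (Suc j'))
   \<or> (\<exists>k. k < K \<and> lhs k = start G \<and> q = Mq k (length (rhs k)) \<and> s = None \<and> lo = Some (0, True) \<and> q' = 1)"

lemma astep_E:
  assumes "astep q s lo q'"
  obtains (init) k where "q = 0" "s = None" "lo = Some (0, False)" "k < K" "lhs k = start G" "q' = Mq k 0"
  | (rd) k j a where "k < K" "j < length (rhs k)" "rhs k ! j = Inr a" "a \<in> terms G" "q = Mq k j" "s = Some a"
      "lo = None" "q' = Mq k (Suc j)"
  | (dn) k j k' where "k < K" "j < length (rhs k)" "k' < K" "rhs k ! j = Inl (lhs k')" "q = Mq k j" "s = None"
      "lo = Some (ecode k j, False)" "q' = Mq k' 0"
  | (up) k k' j' where "k < K" "k' < K" "j' < length (rhs k')" "rhs k' ! j' = Inl (lhs k)"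
      "q = Mq k (length (rhs k))" "s = None" "lo = Some (ecode k' j', True)" "q' = Mq k' (Suc j')"
  | (fin) k where "k < K" "lhs k = start G" "q = Mq k (length (rhs k))" "s = None" "lo = Some (0, True)" "q' = 1"
  using assms unfolding astep_def by blast

lemma no_astep_1: "\<not> astep 1 s lo q'"
proof
  assume "astep 1 s lo q'"
  then show False by (cases rule: astep_E) (simp_all add: Mq_def)
qed

lemma walk_1: "walk astep q w l n \<sigma> \<Longrightarrow> q = 1 \<Longrightarrow> \<sigma> = 1 \<and> w = [] \<and> l = []"
proof (induction rule: walk.induct)
  case (wstep u s lo u' w l n v)
  then show ?case using no_astep_1 by blast
qed simp

lemma walk_0_nolet: "walk astep q w l n \<sigma> \<Longrightarrow> q = 0 \<Longrightarrow> l = [] \<Longrightarrow> \<sigma> = 0 \<and> w = []"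
proof (induction rule: walk.induct)
  case (wstep u s lo u' w l n v)
  then have "lo = None" by (cases lo) auto
  from wstep.hyps(1) show ?case
    by (cases rule: astep_E) (use wstep.prems \<open>lo = None\<close> in auto)
qed simp

lemma walk_nolet:
  "walk astep q w l n \<sigma> \<Longrightarrow> l = [] \<Longrightarrow> q = Mq k j \<Longrightarrow> k < K \<Longrightarrow> j \<le> length (rhs k) \<Longrightarrow>
    \<exists>j'. \<sigma> = Mq k j' \<and> j \<le> j' \<and> j' \<le> length (rhs k) \<and> genl P' (take (j' - j) (drop j (rhs k))) w"
proof (induction arbitrary: j rule: walk.induct)
  case (wrefl u)
  then show ?case by (auto intro: genl.gnil)
next
  case (wstep u s lo u' w l n v)
  then have lo: "lo = None" "l = []" by (cases lo; auto)+
  from wstep.hyps(1) show ?case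
  proof (cases rule: astep_E)
    case (rd k1 j1 a)
    then have kj: "k1 = k" "j1 = j" using wstep.prems by auto
    then obtain j' where j': "v = Mq k j'" "Suc j \<le> j'" "j' \<le> length (rhs k)"
      "genl P' (take (j' - Suc j) (drop (Suc j) (rhs k))) w"
      using wstep.IH[of "Suc j"] lo rd wstep.prems by auto
    have "take (j' - j) (drop j (rhs k)) = take (Suc j - j) (drop j (rhs k)) @ take (j' - Suc j) (drop (Suc j) (rhs k))"
      using j' by (intro sl_append) auto
    also have "take (Suc j - j) (drop j (rhs k)) = [Inr a]" using rd kj sl_single by metis
    finally have "genl P' (take (j' - j) (drop j (rhs k))) (a # w)" using j'(4) by (simp add: genl.gterm)
    then show ?thesis using j' rd by auto
  qed (use lo in auto)
qed

end


context cfgwf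
begin

lemma sound_main:
  "walk astep (Mq k j) w l n \<sigma> \<Longrightarrow> gred l = [] \<Longrightarrow> k < K \<Longrightarrow> j \<le> length (rhs k) \<Longrightarrow>
   \<exists>j'. \<sigma> = Mq k j' \<and> j \<le> j' \<and> j' \<le> length (rhs k) \<and> genl P' (take (j' - j) (drop j (rhs k))) w"
proof (induction "length l" arbitrary: k j w l n \<sigma> rule: less_induct)
  case less
  show ?case
  proof (cases l)
    case Nil
    then show ?thesis using walk_nolet less.prems by blast
  next
    case (Cons x l')
    have "gred (x # l') = []" using less.prems Cons by simp
    then obtain u1 v1 where l': "l' = u1 @ ginv x # v1" "gred u1 = []" "gred v1 = []"
      using gred_Nil_decomp by blast
    obtain m1 m2 s w0 w2 n0 n2 where f1: "walk astep (Mq k j) w0 [] n0 m1" "astep m1 s (Some x) m2"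
      "walk astep m2 w2 l' n2 \<sigma>" "w = w0 @ ol s @ w2"
      using walk_first[OF less.prems(1)[unfolded Cons]] by blast
    obtain j1 where j1: "m1 = Mq k j1" "j \<le> j1" "j1 \<le> length (rhs k)"
      "genl P' (take (j1 - j) (drop j (rhs k))) w0"
      using walk_nolet[OF f1(1) refl refl less.prems(3,4)] by blast
    obtain m3 wa wb na nb where f2: "w2 = wa @ wb" "walk astep m2 wa u1 na m3"
      "walk astep m3 wb (ginv x # v1) nb \<sigma>"
      using walk_split[OF f1(3)[unfolded l'(1)]] by blast
    obtain m4 m5 s' wb0 wb2 nb0 nb2 where f3: "walk astep m3 wb0 [] nb0 m4" "astep m4 s' (Some (ginv x)) m5"
      "walk astep m5 wb2 v1 nb2 \<sigma>" "wb = wb0 @ ol s' @ wb2"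
      using walk_first[OF f2(3)] by blast
    have f23: "walk astep m2 (wa @ wb0) u1 (na + nb0) m4" using walk_trans[OF f2(2) f3(1)] by simp
    have lu1: "length u1 < length l" and lv1: "length v1 < length l" using Cons l' by auto
    from f1(2) show ?thesis
    proof (cases rule: astep_E)
      case (init k0)
      then show ?thesis using j1 by simp
    next
      case (rd k0 j0 a)
      then show ?thesis by simp
    next
      case (dn k0 j0 k')
      then have kk: "k0 = k" "j0 = j1" using j1 by auto
      obtain j2 where j2: "m4 = Mq k' j2" "j2 \<le> length (rhs k')" "genl P' (take (j2 - 0) (drop 0 (rhs k'))) (wa @ wb0)"
        using less.hyps[OF lu1 f23[unfolded dn(8)] l'(2) dn(3)] by auto
      have gx: "ginv x = (ecode k j1, True)" using dn kk by (simp add: ginv_def)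
      have m5: "m5 = Mq k (Suc j1) \<and> s' = None \<and> j2 = length (rhs k')"
        using f3(2) gx j2(1) by (cases rule: astep_E) auto
      have sj: "Suc j1 \<le> length (rhs k)" using dn kk by simp
      obtain j' where j': "\<sigma> = Mq k j'" "Suc j1 \<le> j'" "j' \<le> length (rhs k)"
        "genl P' (take (j' - Suc j1) (drop (Suc j1) (rhs k))) wb2"
        using less.hyps[OF lv1 f3(3)[unfolded conjunct1[OF m5]] l'(3) less.prems(3) sj] by blast
      have gk': "genl P' [Inl (lhs k')] (wa @ wb0)"
        using genl_single_nt[OF lr_in[OF dn(3)]] j2(3) m5 by simp
      have e1: "take (j' - j) (drop j (rhs k)) = take (j1 - j) (drop j (rhs k)) @ take (j' - j1) (drop j1 (rhs k))"
        using j1 j' by (intro sl_append) auto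
      have e2: "take (j' - j1) (drop j1 (rhs k)) = take (Suc j1 - j1) (drop j1 (rhs k)) @ take (j' - Suc j1) (drop (Suc j1) (rhs k))"
        using j' by (intro sl_append) auto
      have e3: "take (Suc j1 - j1) (drop j1 (rhs k)) = [Inl (lhs k')]"
        using sl_single[of j1 "rhs k"] dn kk by simp
      have "genl P' (take (j' - j) (drop j (rhs k))) (w0 @ (wa @ wb0) @ wb2)"
        unfolding e1 e2 e3 using j1(4) gk' j'(4) by (intro genl_append) auto
      moreover have "w = w0 @ (wa @ wb0) @ wb2" using f1(4) f2(1) f3(4) dn m5 by simp
      ultimately show ?thesis using j' j1 by auto
    next
      case (up k0 k' j')
      then have kk: "k0 = k" "j1 = length (rhs k)" using j1 by auto
      have sj: "Suc j' \<le> length (rhs k')" using up by simp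
      obtain j2 where j2: "m4 = Mq k' j2" "Suc j' \<le> j2"
        using less.hyps[OF lu1 f23[unfolded up(8)] l'(2) up(2) sj] by auto
      have gx: "ginv x = (ecode k' j', False)" using up by (simp add: ginv_def)
      have False using f3(2) gx j2 by (cases rule: astep_E) auto
      then show ?thesis ..
    next
      case (fin k0)
      have "m4 = 1" using walk_1[OF f23] fin by simp
      then show ?thesis using f3(2) no_astep_1 by simp
    qed
  qed
qed

lemma walk_to_0: "walk astep q w l n \<sigma> \<Longrightarrow> \<sigma> = 0 \<Longrightarrow> q = 0 \<and> w = []"
proof (induction rule: walk.induct)
  case (wstep u s lo u' w l n v)
  then have "u' = 0" by simp
  from wstep.hyps(1) show ?case using \<open>u' = 0\<close> by (cases rule: astep_E) auto
qed simp

lemma sound_top: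
  assumes "walk astep 0 w l n 1" "gred l = []"
  shows "w \<in> cfg_lang G"
proof (cases l)
  case Nil
  then show ?thesis using walk_0_nolet[OF assms(1) refl] by simp
next
  case (Cons x l')
  have "gred (x # l') = []" using assms Cons by simp
  then obtain u1 v1 where l': "l' = u1 @ ginv x # v1" "gred u1 = []" "gred v1 = []"
    using gred_Nil_decomp by blast
  obtain m1 m2 s w0 w2 n0 n2 where f1: "walk astep 0 w0 [] n0 m1" "astep m1 s (Some x) m2"
    "walk astep m2 w2 l' n2 1" "w = w0 @ ol s @ w2"
    using walk_first[OF assms(1)[unfolded Cons]] by blast
  have m1: "m1 = 0" "w0 = []" using walk_0_nolet[OF f1(1) refl refl] by auto
  obtain m3 wa wb na nb where f2: "w2 = wa @ wb" "walk astep m2 wa u1 na m3"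
    "walk astep m3 wb (ginv x # v1) nb 1"
    using walk_split[OF f1(3)[unfolded l'(1)]] by blast
  obtain m4 m5 s' wb0 wb2 nb0 nb2 where f3: "walk astep m3 wb0 [] nb0 m4" "astep m4 s' (Some (ginv x)) m5"
    "walk astep m5 wb2 v1 nb2 1" "wb = wb0 @ ol s' @ wb2"
    using walk_first[OF f2(3)] by blast
  have f23: "walk astep m2 (wa @ wb0) u1 (na + nb0) m4" using walk_trans[OF f2(2) f3(1)] by simp
  from f1(2) show ?thesis
  proof (cases rule: astep_E)
    case (init k)
    obtain j2 where j2: "m4 = Mq k j2" "j2 \<le> length (rhs k)" "genl P' (take (j2 - 0) (drop 0 (rhs k))) (wa @ wb0)"
      using sound_main[OF f23[unfolded init(6)] l'(2) init(4)] by auto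
    have gx: "ginv x = (0, True)" using init by (simp add: ginv_def)
    have m5: "m5 = 1 \<and> s' = None \<and> j2 = length (rhs k)"
      using f3(2) gx j2(1) by (cases rule: astep_E) auto
    have "wb2 = []" using walk_1[OF f3(3)] m5 by simp
    then have "w = wa @ wb0" using f1(4) m1 init f2(1) f3(4) m5 by simp
    moreover have "genl P' (rhs k) (wa @ wb0)" using j2(3) m5 by simp
    moreover have "(start G, rhs k) \<in> P'" using lr_in[OF init(4)] init(5) by simp
    ultimately show ?thesis using P'_lang by blast
  qed (use m1 in simp_all)
qed

end


lemma comp_ol_gen:
  assumes "(q1, m) \<in> delta B q s" "comp F2 B q1 w (gred (x @ m)) k q' x'"
  shows "comp F2 B q (ol s @ w) x (Suc k) q' x'"
proof (cases s)
  case None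
  have "comp F2 B q w x (Suc k) q' x'"
    by (rule comp.eps[OF assms(1)[unfolded None]]) (simp add: mult_F2' assms(2))
  then show ?thesis using None by simp
next
  case (Some a)
  have "comp F2 B q (a # w) x (Suc k) q' x'"
    by (rule comp.read[OF assms(1)[unfolded Some]]) (simp add: mult_F2' assms(2))
  then show ?thesis using Some by simp
qed

definition tcount :: "('n + 'a) list \<Rightarrow> nat" where "tcount \<beta> = length (filter (\<lambda>s. \<not> isl s) \<beta>)"

lemma tcount_simps[simp]: "tcount [] = 0" "tcount (Inr a # \<beta>) = Suc (tcount \<beta>)" "tcount (Inl B # \<beta>) = tcount \<beta>"
  by (simp_all add: tcount_def)

lemma tcount_ge: "\<gamma> \<noteq> [] \<Longrightarrow> (\<forall>B. \<gamma> \<noteq> [Inl B]) \<Longrightarrow> 2 \<le> length \<gamma> + tcount \<gamma>"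
proof (cases \<gamma>)
  case (Cons x r)
  assume h: "\<forall>B. \<gamma> \<noteq> [Inl B]"
  show ?thesis
  proof (cases r)
    case Nil
    then obtain a where "x = Inr a" using h Cons by (cases x) auto
    then show ?thesis using Cons Nil by simp
  next
    case (Cons y r')
    then show ?thesis using \<open>\<gamma> = x # r\<close> by simp
  qed
qed simp

context cfgwf
begin

definition "Stt = {0, 1} \<union> (\<lambda>(k, j). Mq k j) ` (SIGMA k:{..<K}. {..length (rhs k)})"

definition dlt :: "nat \<Rightarrow> 'a option \<Rightarrow> (nat \<times> f2_letter list) set" where
  "dlt q s = (\<lambda>(q', lo). (q', Fenc (ol lo))) ` {(q', lo). astep q s lo q'}"

definition Aut :: "(nat, 'a, f2_letter list) gaut" where
  "Aut = \<lparr>states = Stt, alphabet = terms G, init = 0,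
     acc = insert 1 (if [] \<in> cfg_lang G then {0} else {}), delta = dlt\<rparr>"

lemma Mq_Stt: "k < K \<Longrightarrow> j \<le> length (rhs k) \<Longrightarrow> Mq k j \<in> Stt"
  unfolding Stt_def by (intro UnI2 rev_image_eqI[of "(k, j)"]) auto

definition "LO = insert None (Some ` (insert 0 ((\<lambda>(k, j). ecode k j) ` (SIGMA k:{..<K}. {..<length (rhs k)})) \<times> (UNIV :: bool set)))"

lemma finLO: "finite LO"
  unfolding LO_def by (intro finite.insertI finite_imageI finite_cartesian_product) auto

lemma ecode_LO: "k < K \<Longrightarrow> j < length (rhs k) \<Longrightarrow> Some (ecode k j, b) \<in> LO"
  unfolding LO_def by (intro insertI2 imageI) (force)

lemma astep_props:
  assumes "astep q s lo q'"
  shows "q \<in> Stt \<and> q' \<in> Stt \<and> lo \<in> LO \<and> (s = None \<or> (\<exists>a\<in>terms G. s = Some a))"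
  using assms
proof (cases rule: astep_E)
  case (init k)
  then show ?thesis using Mq_Stt[of k 0] by (auto simp: Stt_def LO_def)
next
  case (rd k j a)
  then show ?thesis using Mq_Stt[of k j] Mq_Stt[of k "Suc j"] by (auto simp: LO_def)
next
  case (dn k j k')
  then show ?thesis using Mq_Stt[of k j] Mq_Stt[of k' 0] ecode_LO[of k j] by auto
next
  case (up k k' j')
  then show ?thesis using Mq_Stt[of k "length (rhs k)"] Mq_Stt[of k' "Suc j'"] ecode_LO[of k' j'] by auto
next
  case (fin k)
  then show ?thesis using Mq_Stt[of k "length (rhs k)"] by (auto simp: Stt_def LO_def)
qed

lemma finStt: "finite Stt" unfolding Stt_def by simp

lemma greduced_Fenc_ol: "greduced (Fenc (ol lo))"
  by (cases lo) (simp_all add: greduced_enc)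

lemma wf_Aut: "wf_gaut F2 Aut"
proof -
  have fa: "finite (terms G)" using wf by (simp add: wf_cfg_def)
  have acc: "acc Aut \<subseteq> states Aut" by (auto simp: Aut_def Stt_def)
  have A1: "finite (dlt q s) \<and> dlt q s \<subseteq> states Aut \<times> carrier F2" for q s
  proof
    have "{(q', lo). astep q s lo q'} \<subseteq> Stt \<times> LO" using astep_props by blast
    then have "finite {(q', lo). astep q s lo q'}" using finite_subset finStt finLO by blast
    then show "finite (dlt q s)" by (simp add: dlt_def)
    show "dlt q s \<subseteq> states Aut \<times> carrier F2"
      using astep_props greduced_Fenc_ol by (auto simp: dlt_def Aut_def carrier_F2)
  qed
  have A2: "dlt q s = {}" if "\<not> (q \<in> states Aut \<and> (s = None \<or> (\<exists>a \<in> alphabet Aut. s = Some a)))" for q s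
  proof -
    have "\<not> astep q s lo q'" for lo q'
    proof
      assume "astep q s lo q'"
      then have "q \<in> Stt" "s = None \<or> (\<exists>a\<in>terms G. s = Some a)" using astep_props by blast+
      then show False using that by (simp add: Aut_def)
    qed
    then show ?thesis unfolding dlt_def by auto
  qed
  show ?thesis unfolding wf_gaut_def
    using finStt fa acc A1 A2 by (simp add: Aut_def Stt_def)
qed

lemma dlt_iff: "(q1, m) \<in> delta Aut q s \<longleftrightarrow> (\<exists>lo. astep q s lo q1 \<and> m = Fenc (ol lo))"
  by (auto simp: Aut_def dlt_def)

lemma comp_walk2:
  "comp F2 Aut q w x n q' x' \<Longrightarrow> greduced x \<Longrightarrow> \<exists>l. walk astep q w l n q' \<and> x' = gred (x @ Fenc l)"
proof (induction rule: comp.induct)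
  case (stop q x)
  then show ?case using walk.wrefl[of astep q] by (auto simp: gred_greduced)
next
  case (read q1 m q a w x k q' x')
  obtain lo where lo: "astep q (Some a) lo q1" "m = Fenc (ol lo)" using read.hyps(1) dlt_iff by blast
  have r: "greduced (x \<otimes>\<^bsub>F2\<^esub> m)" by (simp add: mult_F2' greduced_gred)
  obtain l where l: "walk astep q1 w l k q'" "x' = gred ((x \<otimes>\<^bsub>F2\<^esub> m) @ Fenc l)"
    using read.IH[OF r] by blast
  have "walk astep q (ol (Some a) @ w) (ol lo @ l) (Suc k) q'" by (rule walk.wstep[OF lo(1) l(1)])
  moreover have "x' = gred (x @ Fenc (ol lo @ l))" using l(2) lo(2)
    by (simp add: mult_F2') (metis append_assoc gred_append_left)
  ultimately show ?case by auto
next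
  case (eps q1 m q w x k q' x')
  obtain lo where lo: "astep q None lo q1" "m = Fenc (ol lo)" using eps.hyps(1) dlt_iff by blast
  have r: "greduced (x \<otimes>\<^bsub>F2\<^esub> m)" by (simp add: mult_F2' greduced_gred)
  obtain l where l: "walk astep q1 w l k q'" "x' = gred ((x \<otimes>\<^bsub>F2\<^esub> m) @ Fenc l)"
    using eps.IH[OF r] by blast
  have "walk astep q (ol None @ w) (ol lo @ l) (Suc k) q'" by (rule walk.wstep[OF lo(1) l(1)])
  moreover have "x' = gred (x @ Fenc (ol lo @ l))" using l(2) lo(2)
    by (simp add: mult_F2') (metis append_assoc gred_append_left)
  ultimately show ?case by auto
qed

lemma walk_comp2:
  "walk astep q w l n q' \<Longrightarrow> greduced x \<Longrightarrow> comp F2 Aut q w x n q' (gred (x @ Fenc l))"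
proof (induction arbitrary: x rule: walk.induct)
  case (wrefl u)
  then show ?case by (simp add: gred_greduced comp.stop)
next
  case (wstep u s lo u' w l n v)
  have d: "(u', Fenc (ol lo)) \<in> delta Aut u s" using wstep.hyps(1) dlt_iff by blast
  have "comp F2 Aut u' w (gred (x @ Fenc (ol lo))) n v (gred (gred (x @ Fenc (ol lo)) @ Fenc l))"
    using wstep.IH greduced_gred by blast
  then have "comp F2 Aut u (ol s @ w) x (Suc n) v (gred (gred (x @ Fenc (ol lo)) @ Fenc l))"
    by (rule comp_ol_gen[OF d])
  moreover have "gred (gred (x @ Fenc (ol lo)) @ Fenc l) = gred (x @ Fenc (ol lo @ l))"
    by (simp) (metis append_assoc gred_append_left)
  ultimately show ?case by simp
qed

lemma compl_walk:
  "genl P' \<beta> w \<Longrightarrow> k < K \<Longrightarrow> j \<le> length (rhs k) \<Longrightarrow> drop j (rhs k) = \<beta> \<Longrightarrow>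
   \<exists>l n. walk astep (Mq k j) w l n (Mq k (length (rhs k))) \<and> gred l = [] \<and> n + 2 * length \<beta> + 2 * tcount \<beta> \<le> 5 * length w"
proof (induction arbitrary: k j rule: genl.induct)
  case gnil
  then have "j = length (rhs k)" by simp
  then show ?case by (intro exI[of _ "[]"] exI[of _ 0]) (auto intro: walk.wrefl)
next
  case (gterm \<alpha> w a)
  have jl: "j < length (rhs k)" using gterm.prems by (metis drop_all list.distinct(1) not_le_imp_less)
  have e: "rhs k ! j # drop (Suc j) (rhs k) = Inr a # \<alpha>" using gterm.prems jl by (simp add: Cons_nth_drop_Suc)
  then have ra: "rhs k ! j = Inr a" "drop (Suc j) (rhs k) = \<alpha>" by auto
  have "Inr a \<in> set (rhs k)" using ra(1) jl nth_mem by metis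
  then have aT: "a \<in> terms G" using P'_props[OF lr_in[OF gterm.prems(1)]] by (auto simp: Vs_def)
  obtain l n where ln: "walk astep (Mq k (Suc j)) w l n (Mq k (length (rhs k)))" "gred l = []"
    "n + 2 * length \<alpha> + 2 * tcount \<alpha> \<le> 5 * length w"
    using gterm.IH[OF gterm.prems(1) _ ra(2)] jl by auto
  have st: "astep (Mq k j) (Some a) None (Mq k (Suc j))"
    unfolding astep_def using gterm.prems(1) jl ra(1) aT by blast
  have "walk astep (Mq k j) (ol (Some a) @ w) (ol None @ l) (Suc n) (Mq k (length (rhs k)))"
    by (rule walk.wstep[OF st ln(1)])
  then show ?case using ln by (intro exI[of _ l] exI[of _ "Suc n"]) auto
next
  case (gnt B \<gamma> u \<alpha> v)
  have jl: "j < length (rhs k)" using gnt.prems by (metis drop_all list.distinct(1) not_le_imp_less)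
  have e: "rhs k ! j # drop (Suc j) (rhs k) = Inl B # \<alpha>" using gnt.prems jl by (simp add: Cons_nth_drop_Suc)
  then have rb: "rhs k ! j = Inl B" "drop (Suc j) (rhs k) = \<alpha>" by auto
  obtain k' where k': "k' < K" "prd k' = (B, \<gamma>)" using prd_ex[OF gnt.hyps(1)] by blast
  then have lr: "lhs k' = B" "rhs k' = \<gamma>" by (auto simp: lhs_def rhs_def)
  obtain l1 n1 where l1: "walk astep (Mq k' 0) u l1 n1 (Mq k' (length \<gamma>))" "gred l1 = []"
    "n1 + 2 * length \<gamma> + 2 * tcount \<gamma> \<le> 5 * length u"
    using gnt.IH(1)[of k' 0] k'(1) lr by auto
  obtain l2 n2 where l2: "walk astep (Mq k (Suc j)) v l2 n2 (Mq k (length (rhs k)))" "gred l2 = []"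
    "n2 + 2 * length \<alpha> + 2 * tcount \<alpha> \<le> 5 * length v"
    using gnt.IH(2)[OF gnt.prems(1) _ rb(2)] jl by auto
  have dn: "astep (Mq k j) None (Some (ecode k j, False)) (Mq k' 0)"
    unfolding astep_def using gnt.prems(1) jl k'(1) rb(1) lr by blast
  have up: "astep (Mq k' (length \<gamma>)) None (Some (ecode k j, True)) (Mq k (Suc j))"
    unfolding astep_def using gnt.prems(1) jl k'(1) rb(1) lr by blast
  have w2: "walk astep (Mq k' (length \<gamma>)) (ol None @ v) (ol (Some (ecode k j, True)) @ l2) (Suc n2) (Mq k (length (rhs k)))"
    by (rule walk.wstep[OF up l2(1)])
  have w12: "walk astep (Mq k' 0) (u @ v) (l1 @ (ecode k j, True) # l2) (n1 + Suc n2) (Mq k (length (rhs k)))"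
    using walk_trans[OF l1(1) w2] by simp
  have w3: "walk astep (Mq k j) (ol None @ (u @ v)) (ol (Some (ecode k j, False)) @ (l1 @ (ecode k j, True) # l2))
      (Suc (n1 + Suc n2)) (Mq k (length (rhs k)))"
    by (rule walk.wstep[OF dn w12])
  have g: "gred ((ecode k j, False) # l1 @ (ecode k j, True) # l2) = []"
    using gred_wrap[OF l1(2), of "(ecode k j, False)" l2] l2(2) by (simp add: ginv_def)
  have "2 \<le> length \<gamma> + tcount \<gamma>" using P'_props[OF gnt.hyps(1)] tcount_ge by blast
  then have "Suc (n1 + Suc n2) + 2 * length (Inl B # \<alpha>) + 2 * tcount (Inl B # \<alpha>) \<le> 5 * length (u @ v)"
    using l1(3) l2(3) by simp
  then show ?case using w3 g by (intro exI[of _ "(ecode k j, False) # l1 @ (ecode k j, True) # l2"] exI[of _ "Suc (n1 + Suc n2)"]) auto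
qed

lemma Aut_lang_sub: "w \<in> gaut_lang F2 Aut \<Longrightarrow> w \<in> cfg_lang G"
proof -
  assume "w \<in> gaut_lang F2 Aut"
  then obtain k f where f: "f \<in> acc Aut" "comp F2 Aut 0 w [] k f []"
    by (auto simp: gaut_lang_def accepts_in_def one_F2 Aut_def)
  then obtain l where l: "walk astep 0 w l k f" "[] = gred ([] @ Fenc l)" using comp_walk2 by fastforce
  then have gl: "gred l = []" by (metis gred_Fenc_Nil_iff append_Nil)
  show ?thesis
  proof (cases "f = 1")
    case True
    then show ?thesis using sound_top l(1) gl by simp
  next
    case False
    then have "f = 0" "[] \<in> cfg_lang G" using f(1) by (auto simp: Aut_def split: if_splits)
    then show ?thesis using walk_to_0[OF l(1)] by simp
  qed
qed

lemma Aut_complete: "w \<in> cfg_lang G \<Longrightarrow> \<exists>n \<le> 5 * length w + 2. accepts_in F2 Aut w n"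
proof (cases "w = []")
  case True
  assume "w \<in> cfg_lang G"
  then have "0 \<in> acc Aut" using True by (simp add: Aut_def)
  moreover have "comp F2 Aut (init Aut) w \<one>\<^bsub>F2\<^esub> 0 0 \<one>\<^bsub>F2\<^esub>" using True by (simp add: Aut_def one_F2 comp.stop)
  ultimately show ?thesis unfolding accepts_in_def by blast
next
  case False
  assume "w \<in> cfg_lang G"
  then obtain \<delta> where d: "(start G, \<delta>) \<in> P'" "genl P' \<delta> w" using lang_P' False by blast
  obtain k where k: "k < K" "prd k = (start G, \<delta>)" using prd_ex[OF d(1)] by blast
  then have lr: "lhs k = start G" "rhs k = \<delta>" by (auto simp: lhs_def rhs_def)
  obtain l n where ln: "walk astep (Mq k 0) w l n (Mq k (length \<delta>))" "gred l = []"
    "n + 2 * length \<delta> + 2 * tcount \<delta> \<le> 5 * length w"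
    using compl_walk[OF d(2) k(1), of 0] lr by auto
  have i: "astep 0 None (Some (0, False)) (Mq k 0)" unfolding astep_def using k(1) lr by blast
  have fi: "astep (Mq k (length \<delta>)) None (Some (0, True)) 1" unfolding astep_def using k(1) lr by blast
  have "walk astep (Mq k 0) (w @ ol None) (l @ ol (Some (0, True))) (n + 1) 1"
    using walk_trans[OF ln(1) walk_one[of astep _ None "Some (0, True)" 1, OF fi]] .
  from walk.wstep[OF i this]
  have W: "walk astep 0 w ((0, False) # l @ [(0, True)]) (Suc (n + 1)) 1" by simp
  have G0: "gred ((0, False) # l @ [(0, True)]) = []"
    using gred_wrap[OF ln(2), of "(0, False)" "[]"] by (simp add: ginv_def)
  have G1: "gred (Fenc ((0, False) # l @ [(0, True)])) = []" by (rule iffD2[OF gred_Fenc_Nil_iff G0])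
  have "comp F2 Aut 0 w [] (Suc (n + 1)) 1 (gred ([] @ Fenc ((0, False) # l @ [(0, True)])))"
    using walk_comp2[OF W, of "[]"] by simp
  then have "comp F2 Aut 0 w [] (Suc (n + 1)) 1 []" by (simp only: append_Nil G1)
  then have "accepts_in F2 Aut w (Suc (n + 1))" by (simp add: accepts_in_def Aut_def one_F2)
  moreover have "Suc (n + 1) \<le> 5 * length w + 2" using ln(3) by simp
  ultimately show ?thesis by blast
qed

lemma Aut_lang: "gaut_lang F2 Aut = cfg_lang G"
proof -
  have "cfg_lang G \<subseteq> gaut_lang F2 Aut"
    using Aut_complete by (auto simp: gaut_lang_def)
  then show ?thesis using Aut_lang_sub by blast
qed

lemma Aut_wtb: "weakly_time_bounded F2 Aut (\<lambda>n. 5 * n + 2)"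
  unfolding weakly_time_bounded_def using Aut_complete Aut_lang by auto

end

lemma lin_bigo: "(\<lambda>n. real (5 * n + 2)) \<in> O(\<lambda>n. real n)"
proof (rule bigoI[of _ 7])
  show "\<forall>\<^sub>F n in at_top. norm (real (5 * n + 2)) \<le> 7 * norm (real n)"
    unfolding eventually_at_top_linorder by (intro exI[of _ 1]) auto
qed

lemma CF_sub_weak: "CF \<Sigma> \<subseteq> weak_linear_class F2 \<Sigma>"
proof
  fix L assume "L \<in> CF \<Sigma>"
  then obtain G :: "(nat, 'a) cfg" where G: "wf_cfg G" "terms G = \<Sigma>" "cfg_lang G = L"
    by (auto simp: CF_def)
  interpret cfgwf G by unfold_locales (rule G(1))
  have "wf_gaut F2 Aut \<and> alphabet Aut = \<Sigma> \<and> gaut_lang F2 Aut = L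
     \<and> (\<lambda>n. real (5 * n + 2)) \<in> O(\<lambda>n. real n) \<and> weakly_time_bounded F2 Aut (\<lambda>n. 5 * n + 2)"
    using wf_Aut Aut_lang Aut_wtb lin_bigo G by (simp add: Aut_def)
  then show "L \<in> weak_linear_class F2 \<Sigma>" unfolding weak_linear_class_def
    by (intro CollectI exI[of _ Aut] exI[of _ "\<lambda>n. 5 * n + 2"]) simp
qed


theorem theorem4p6:
  fixes \<Sigma> :: "'a set"
  assumes "finite \<Sigma>"
  shows "weak_linear_class F2 \<Sigma> = CF \<Sigma>"
  using weak_sub_CF CF_sub_weak by blast

end
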